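(* Let $G\in\mathcal{C}$, let $H$ be a hole of $G$, let $u,v$ be two non-adjacent major vertices for $H$, and let $P=u'\text{-}\cdots\text{-}u''$ be a $u$-sector of $H$. Then one of the following holds: (i) $P$ contains at most one neighbor of $v$, and if it contains one, that neighbor is $u'$ or $u''$; (ii) $u'u''\in E(G)$ and $v$ is adjacent to both $u'$ and $u''$; (iii) $P$ contains at least three neighbors of $v$; (iv) $G[V(H)\cup\{u,v\}]$ is isomorphic to the cube graph (the 1-skeleton of the 3-dimensional cube).
   Context: All graphs are finite and simple; paths are induced paths; a hole is an induced cycle of length at least four. $\mathcal{C}$ is the class of graphs containing no theta, pyramid, prism or turtle as an induced subgraph, where: a theta consists of two nonadjacent vertices $a,b$ and three paths from $a$ to $b$, otherwise vertex-disjoint, any two of which induce a hole; a pyramid consists of a vertex $a$, a triangle $\{b_1,b_2,b_3\}$ and paths $P_i$ from $a$ to $b_i$, pairwise disjoint except at $a$, any two of which induce a hole; a prism consists of two disjoint triangles $\{a_1,a_2,a_3\},\{b_1,b_2,b_3\}$ and pairwise disjoint paths $P_i$ from $a_i$ to $b_i$, any two of which induce a hole; a turtle consists of disjoint paths $P_1$ (from $a_1$ to $b_1$), $P_2$ (from $a_2$ to $b_2$) with $a_1a_2,b_1b_2$ edges and $V(P_1)\cup V(P_2)$ inducing a hole, plus adjacent vertices $x,y$ where $x$ has at least three neighbors in $P_1$ and none in $P_2$, and $y$ has at least three neighbors in $P_2$ and none in $P_1$. For a hole $H$ and $u\notin V(H)$, $N_H(u)$ is the set of neighbors of $u$ in $H$.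 A vertex $u\notin V(H)$ is minor for $H$ if $N_H(u)\neq\emptyset$ and $N_H(u)$ is contained in the vertex set of some three-vertex subpath of $H$; it is major for $H$ if $N_H(u)\ne\emptyset$ and $u$ is not minor. For $u\notin V(H)$ with at least two neighbors in $H$, a $u$-sector is a subpath $P=u'\text{-}\cdots\text{-}u''$ of $H$ whose ends $u',u''$ are neighbors of $u$ and whose interior (vertices other than $u',u''$) contains no neighbor of $u$. *)

theory Defs
  imports Main
begin

definition graph :: "'a set \<Rightarrow> ('a \<Rightarrow> 'a \<Rightarrow> bool) \<Rightarrow> bool" where
  "graph V E \<longleftrightarrow> finite V \<and> (\<forall>x y. E x y \<longrightarrow> x \<in> V \<and> y \<in> V)
     \<and> (\<forall>x y. E x y \<longrightarrow> E y x) \<and> (\<forall>x. \<not> E x x)"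

definition is_path :: "'a set \<Rightarrow> ('a \<Rightarrow> 'a \<Rightarrow> bool) \<Rightarrow> 'a list \<Rightarrow> bool" where
  "is_path V E P \<longleftrightarrow> P \<noteq> [] \<and> distinct P \<and> set P \<subseteq> V \<and>
     (\<forall>i j. i < length P \<longrightarrow> j < length P \<longrightarrow> (E (P!i) (P!j) \<longleftrightarrow> (j = i + 1 \<or> i = j + 1)))"

definition path_from_to :: "'a set \<Rightarrow> ('a \<Rightarrow> 'a \<Rightarrow> bool) \<Rightarrow> 'a list \<Rightarrow> 'a \<Rightarrow> 'a \<Rightarrow> bool" where
  "path_from_to V E P a b \<longleftrightarrow> is_path V E P \<and> hd P = a \<and> last P = b"

definition is_hole :: "'a set \<Rightarrow> ('a \<Rightarrow> 'a \<Rightarrow> bool) \<Rightarrow> 'a list \<Rightarrow> bool" where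
  "is_hole V E C \<longleftrightarrow> length C \<ge> 4 \<and> distinct C \<and> set C \<subseteq> V \<and>
     (\<forall>i j. i < length C \<longrightarrow> j < length C \<longrightarrow>
        (E (C!i) (C!j) \<longleftrightarrow> (j = Suc i mod length C \<or> i = Suc j mod length C)))"

definition induces_hole :: "'a set \<Rightarrow> ('a \<Rightarrow> 'a \<Rightarrow> bool) \<Rightarrow> 'a set \<Rightarrow> bool" where
  "induces_hole V E S \<longleftrightarrow> (\<exists>C. is_hole V E C \<and> set C = S)"

definition triangle :: "('a \<Rightarrow> 'a \<Rightarrow> bool) \<Rightarrow> 'a \<Rightarrow> 'a \<Rightarrow> 'a \<Rightarrow> bool" where
  "triangle E x y z \<longleftrightarrow> E x y \<and> E y z \<and> E x z"

definition has_theta :: "'a set \<Rightarrow> ('a \<Rightarrow> 'a \<Rightarrow> bool) \<Rightarrow> bool" where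
  "has_theta V E \<longleftrightarrow> (\<exists>a b P1 P2 P3. a \<noteq> b \<and> \<not> E a b \<and>
     path_from_to V E P1 a b \<and> path_from_to V E P2 a b \<and> path_from_to V E P3 a b \<and>
     set P1 \<inter> set P2 = {a, b} \<and> set P1 \<inter> set P3 = {a, b} \<and> set P2 \<inter> set P3 = {a, b} \<and>
     induces_hole V E (set P1 \<union> set P2) \<and> induces_hole V E (set P1 \<union> set P3) \<and>
     induces_hole V E (set P2 \<union> set P3))"

definition has_pyramid :: "'a set \<Rightarrow> ('a \<Rightarrow> 'a \<Rightarrow> bool) \<Rightarrow> bool" where
  "has_pyramid V E \<longleftrightarrow> (\<exists>a b1 b2 b3 P1 P2 P3. triangle E b1 b2 b3 \<and>
     path_from_to V E P1 a b1 \<and> path_from_to V E P2 a b2 \<and> path_from_to V E P3 a b3 \<and>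
     set P1 \<inter> set P2 = {a} \<and> set P1 \<inter> set P3 = {a} \<and> set P2 \<inter> set P3 = {a} \<and>
     induces_hole V E (set P1 \<union> set P2) \<and> induces_hole V E (set P1 \<union> set P3) \<and>
     induces_hole V E (set P2 \<union> set P3))"

definition has_prism :: "'a set \<Rightarrow> ('a \<Rightarrow> 'a \<Rightarrow> bool) \<Rightarrow> bool" where
  "has_prism V E \<longleftrightarrow> (\<exists>a1 a2 a3 b1 b2 b3 P1 P2 P3.
     triangle E a1 a2 a3 \<and> triangle E b1 b2 b3 \<and>
     {a1, a2, a3} \<inter> {b1, b2, b3} = {} \<and>
     path_from_to V E P1 a1 b1 \<and> path_from_to V E P2 a2 b2 \<and> path_from_to V E P3 a3 b3 \<and>
     set P1 \<inter> set P2 = {} \<and> set P1 \<inter> set P3 = {} \<and> set P2 \<inter> set P3 = {} \<and>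
     induces_hole V E (set P1 \<union> set P2) \<and> induces_hole V E (set P1 \<union> set P3) \<and>
     induces_hole V E (set P2 \<union> set P3))"

definition has_turtle :: "'a set \<Rightarrow> ('a \<Rightarrow> 'a \<Rightarrow> bool) \<Rightarrow> bool" where
  "has_turtle V E \<longleftrightarrow> (\<exists>a1 b1 a2 b2 P1 P2 x y.
     path_from_to V E P1 a1 b1 \<and> path_from_to V E P2 a2 b2 \<and> set P1 \<inter> set P2 = {} \<and>
     E a1 a2 \<and> E b1 b2 \<and> induces_hole V E (set P1 \<union> set P2) \<and>
     x \<in> V \<and> y \<in> V \<and> x \<notin> set P1 \<union> set P2 \<and> y \<notin> set P1 \<union> set P2 \<and> E x y \<and>
     card {z \<in> set P1. E x z} \<ge> 3 \<and> (\<forall>z \<in> set P2. \<not> E x z) \<and>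
     card {z \<in> set P2. E y z} \<ge> 3 \<and> (\<forall>z \<in> set P1. \<not> E y z))"

definition in_class_C :: "'a set \<Rightarrow> ('a \<Rightarrow> 'a \<Rightarrow> bool) \<Rightarrow> bool" where
  "in_class_C V E \<longleftrightarrow> \<not> has_theta V E \<and> \<not> has_pyramid V E \<and> \<not> has_prism V E \<and> \<not> has_turtle V E"

text \<open>Subpath of the hole H: a path of G whose vertices lie in H (H is induced).\<close>
definition subpath_of_hole :: "'a set \<Rightarrow> ('a \<Rightarrow> 'a \<Rightarrow> bool) \<Rightarrow> 'a list \<Rightarrow> 'a list \<Rightarrow> bool" where
  "subpath_of_hole V E H P \<longleftrightarrow> is_path V E P \<and> set P \<subseteq> set H"

definition nbrs_in :: "('a \<Rightarrow> 'a \<Rightarrow> bool) \<Rightarrow> 'a \<Rightarrow> 'a set \<Rightarrow> 'a set" where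
  "nbrs_in E u S = {x \<in> S. E u x}"

definition minor :: "'a set \<Rightarrow> ('a \<Rightarrow> 'a \<Rightarrow> bool) \<Rightarrow> 'a list \<Rightarrow> 'a \<Rightarrow> bool" where
  "minor V E H u \<longleftrightarrow> u \<in> V \<and> u \<notin> set H \<and> nbrs_in E u (set H) \<noteq> {} \<and>
     (\<exists>Q. subpath_of_hole V E H Q \<and> length Q = 3 \<and> nbrs_in E u (set H) \<subseteq> set Q)"

definition major :: "'a set \<Rightarrow> ('a \<Rightarrow> 'a \<Rightarrow> bool) \<Rightarrow> 'a list \<Rightarrow> 'a \<Rightarrow> bool" where
  "major V E H u \<longleftrightarrow> u \<in> V \<and> u \<notin> set H \<and> nbrs_in E u (set H) \<noteq> {} \<and> \<not> minor V E H u"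

definition sector :: "'a set \<Rightarrow> ('a \<Rightarrow> 'a \<Rightarrow> bool) \<Rightarrow> 'a list \<Rightarrow> 'a \<Rightarrow> 'a list \<Rightarrow> 'a \<Rightarrow> 'a \<Rightarrow> bool" where
  "sector V E H u P u' u'' \<longleftrightarrow> u \<in> V \<and> u \<notin> set H \<and> card (nbrs_in E u (set H)) \<ge> 2 \<and>
     subpath_of_hole V E H P \<and> hd P = u' \<and> last P = u'' \<and> E u u' \<and> E u u'' \<and>
     (\<forall>x \<in> set P - {u', u''}. \<not> E u x)"

definition cube_adj :: "bool \<times> bool \<times> bool \<Rightarrow> bool \<times> bool \<times> bool \<Rightarrow> bool" where
  "cube_adj p q \<longleftrightarrow> (case p of (a, b, c) \<Rightarrow> case q of (a', b', c') \<Rightarrow>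
      (a \<noteq> a' \<and> b = b' \<and> c = c') \<or> (a = a' \<and> b \<noteq> b' \<and> c = c') \<or> (a = a' \<and> b = b' \<and> c \<noteq> c'))"

definition induced_iso_cube :: "('a \<Rightarrow> 'a \<Rightarrow> bool) \<Rightarrow> 'a set \<Rightarrow> bool" where
  "induced_iso_cube E S \<longleftrightarrow> (\<exists>f. bij_betw f S (UNIV :: (bool \<times> bool \<times> bool) set) \<and>
     (\<forall>x \<in> S. \<forall>y \<in> S. E x y \<longleftrightarrow> cube_adj (f x) (f y)))"

end

theory Submission
  imports Defs
begin


definition ladj :: "'a list \<Rightarrow> 'a \<Rightarrow> 'a \<Rightarrow> bool" where
  "ladj L x y \<longleftrightarrow> (\<exists>i. Suc i < length L \<and> ((L!i = x \<and> L!Suc i = y) \<or> (L!i = y \<and> L!Suc i = x)))"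

lemma ladj_Nil[simp]: "\<not> ladj [] x y"
  by (simp add: ladj_def)

lemma ladj_single[simp]: "\<not> ladj [a] x y"
  by (simp add: ladj_def)

lemma ladj_Cons: "ladj (a # L) x y \<longleftrightarrow> ladj L x y \<or> (L \<noteq> [] \<and> ((a = x \<and> hd L = y) \<or> (a = y \<and> hd L = x)))"
  apply (simp add: ladj_def)
  apply (rule iffI)
   apply (elim exE)
   subgoal for i
     apply (cases i)
      apply (cases L; auto)
     apply auto
     done
  apply (elim disjE exE)
    apply (rule_tac x="Suc i" in exI; simp)
   apply (rule_tac x="0" in exI; cases L; simp)
  done


lemma ladj_append: "ladj (L1 @ L2) x y \<longleftrightarrow> ladj L1 x y \<or> ladj L2 x y \<or>
   (L1 \<noteq> [] \<and> L2 \<noteq> [] \<and> ((last L1 = x \<and> hd L2 = y) \<or> (last L1 = y \<and> hd L2 = x)))"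
proof (induction L1)
  case Nil
  then show ?case by simp
next
  case (Cons a L1)
  show ?case
  proof (cases L1)
    case Nil
    then show ?thesis by (cases L2) (auto simp: ladj_Cons)
  next
    case (Cons b L1')
    then show ?thesis using Cons.IH by (auto simp: ladj_Cons)
  qed
qed

lemma ladj_sym: "ladj L x y \<longleftrightarrow> ladj L y x"
  by (auto simp: ladj_def)

lemma ladj_rev[simp]: "ladj (rev L) x y \<longleftrightarrow> ladj L x y"
proof (induction L)
  case Nil
  then show ?case by simp
next
  case (Cons a L)
  then show ?case
    by (cases L) (auto simp: ladj_append ladj_Cons)
qed

lemma ladj_set: "ladj L x y \<Longrightarrow> x \<in> set L \<and> y \<in> set L"
  by (auto simp: ladj_def)


lemma ladj_nth_iff:
  assumes "distinct L" "i < length L" "j < length L"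
  shows "ladj L (L!i) (L!j) \<longleftrightarrow> (j = i + 1 \<or> i = j + 1)"
proof
  assume "ladj L (L!i) (L!j)"
  then obtain k where k: "Suc k < length L" "(L!k = L!i \<and> L!Suc k = L!j) \<or> (L!k = L!j \<and> L!Suc k = L!i)"
    by (auto simp: ladj_def)
  have kl: "k < length L" using k(1) by simp
  show "j = i + 1 \<or> i = j + 1"
    using k(2)
  proof
    assume "L!k = L!i \<and> L!Suc k = L!j"
    then have "k = i" "Suc k = j"
      using nth_eq_iff_index_eq[OF assms(1) kl assms(2)] nth_eq_iff_index_eq[OF assms(1) k(1) assms(3)] by auto
    then show ?thesis by simp
  next
    assume "L!k = L!j \<and> L!Suc k = L!i"
    then have "k = j" "Suc k = i"
      using nth_eq_iff_index_eq[OF assms(1) kl assms(3)] nth_eq_iff_index_eq[OF assms(1) k(1) assms(2)] by auto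
    then show ?thesis by simp
  qed
next
  assume "j = i + 1 \<or> i = j + 1"
  then show "ladj L (L!i) (L!j)"
  proof
    assume "j = i + 1" then show ?thesis unfolding ladj_def using assms by (intro exI[of _ i]) auto
  next
    assume "i = j + 1" then show ?thesis unfolding ladj_def using assms by (intro exI[of _ j]) auto
  qed
qed

lemma is_path_iff:
  "is_path V E L \<longleftrightarrow> L \<noteq> [] \<and> distinct L \<and> set L \<subseteq> V \<and>
     (\<forall>x\<in>set L. \<forall>y\<in>set L. E x y \<longleftrightarrow> ladj L x y)"
proof
  assume p: "is_path V E L"
  then have d: "distinct L" and ne: "L \<noteq> []" and s: "set L \<subseteq> V"
    and e: "\<And>i j. i < length L \<Longrightarrow> j < length L \<Longrightarrow> E (L!i) (L!j) \<longleftrightarrow> (j = i + 1 \<or> i = j + 1)"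
    unfolding is_path_def by blast+
  have "E x y \<longleftrightarrow> ladj L x y" if xy: "x \<in> set L" "y \<in> set L" for x y
  proof -
    obtain i where i: "i < length L" "L!i = x"
      using xy(1) by (auto simp: in_set_conv_nth)
    obtain j where j: "j < length L" "L!j = y"
      using xy(2) by (auto simp: in_set_conv_nth)
    show ?thesis using e[OF i(1) j(1)] ladj_nth_iff[OF d i(1) j(1)] i(2)[symmetric] j(2)[symmetric] by simp
  qed
  then show "L \<noteq> [] \<and> distinct L \<and> set L \<subseteq> V \<and> (\<forall>x\<in>set L. \<forall>y\<in>set L. E x y \<longleftrightarrow> ladj L x y)"
    using d ne s by blast
next
  assume a: "L \<noteq> [] \<and> distinct L \<and> set L \<subseteq> V \<and> (\<forall>x\<in>set L. \<forall>y\<in>set L. E x y \<longleftrightarrow> ladj L x y)"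
  have key: "E (L!i) (L!j) \<longleftrightarrow> (j = i + 1 \<or> i = j + 1)" if ij: "i < length L" "j < length L" for i j
  proof -
    have "E (L!i) (L!j) \<longleftrightarrow> ladj L (L!i) (L!j)"
      using a nth_mem[OF ij(1)] nth_mem[OF ij(2)] by blast
    then show ?thesis using ladj_nth_iff[of L i j] a ij by simp
  qed
  from a have "L \<noteq> []" "distinct L" "set L \<subseteq> V" by auto
  then show "is_path V E L" unfolding is_path_def by (simp add: key)
qed


lemma Suc_mod_lt: "i < n \<Longrightarrow> Suc i mod n = (if Suc i = n then 0 else Suc i)"
  by (cases "Suc i = n") simp_all

lemma is_hole_if:
  assumes len: "length C \<ge> 4" and d: "distinct C" and sv: "set C \<subseteq> V"
    and e: "\<forall>x\<in>set C. \<forall>y\<in>set C. E x y \<longleftrightarrow> ladj C x y \<or> (x = hd C \<and> y = last C) \<or> (x = last C \<and> y = hd C)"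
  shows "is_hole V E C"
proof -
  let ?n = "length C"
  have cne: "C \<noteq> []" using len by auto
  have hd: "hd C = C!0" using cne by (simp add: hd_conv_nth)
  have lst: "last C = C!(?n - 1)" using cne by (simp add: last_conv_nth)
  have key: "E (C!i) (C!j) \<longleftrightarrow> (j = Suc i mod ?n \<or> i = Suc j mod ?n)" if ij: "i < ?n" "j < ?n" for i j
  proof -
    have n0: "0 < ?n" "?n - 1 < ?n" using len by auto
    have a1: "ladj C (C!i) (C!j) \<longleftrightarrow> (j = i + 1 \<or> i = j + 1)"
      by (rule ladj_nth_iff[OF d ij])
    have a2: "(C!i = hd C \<and> C!j = last C) \<longleftrightarrow> (i = 0 \<and> j = ?n - 1)"
      unfolding hd lst using nth_eq_iff_index_eq[OF d ij(1) n0(1)] nth_eq_iff_index_eq[OF d ij(2) n0(2)] by simp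
    have a3: "(C!i = last C \<and> C!j = hd C) \<longleftrightarrow> (j = 0 \<and> i = ?n - 1)"
      unfolding hd lst using nth_eq_iff_index_eq[OF d ij(2) n0(1)] nth_eq_iff_index_eq[OF d ij(1) n0(2)] by (simp add: conj_commute)
    have a4: "(j = Suc i mod ?n \<or> i = Suc j mod ?n) \<longleftrightarrow>
        (j = i + 1 \<or> i = j + 1 \<or> (i = 0 \<and> j = ?n - 1) \<or> (j = 0 \<and> i = ?n - 1))"
      unfolding Suc_mod_lt[OF ij(1)] Suc_mod_lt[OF ij(2)] using ij len by auto
    have "E (C!i) (C!j) \<longleftrightarrow> ladj C (C!i) (C!j) \<or> (C!i = hd C \<and> C!j = last C) \<or> (C!i = last C \<and> C!j = hd C)"
      by (rule e[rule_format, OF nth_mem[OF ij(1)] nth_mem[OF ij(2)]])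
    then show ?thesis unfolding a1 a2 a3 a4 by (simp only: disj_assoc)
  qed
  show ?thesis using len d sv unfolding is_hole_def by (simp add: key)
qed


lemma graph_sym: "graph V E \<Longrightarrow> E x y \<Longrightarrow> E y x"
  unfolding graph_def by blast

lemma graph_irrefl: "graph V E \<Longrightarrow> \<not> E x x"
  unfolding graph_def by blast

lemma hole2:
  assumes g: "graph V E" and p1: "is_path V E L1" and p2: "is_path V E L2"
    and dj: "set L1 \<inter> set L2 = {}"
    and e1: "E (last L1) (hd L2)" and e2: "E (last L2) (hd L1)"
    and cr: "\<forall>x\<in>set L1. \<forall>y\<in>set L2. E x y \<longrightarrow> (x = last L1 \<and> y = hd L2) \<or> (x = hd L1 \<and> y = last L2)"
    and len: "length L1 + length L2 \<ge> 4"
  shows "is_hole V E (L1 @ L2)"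
proof (rule is_hole_if)
  from p1 have n1: "L1 \<noteq> []" and d1: "distinct L1" and s1: "set L1 \<subseteq> V"
    and a1: "\<forall>x\<in>set L1. \<forall>y\<in>set L1. E x y \<longleftrightarrow> ladj L1 x y" by (auto simp: is_path_iff)
  from p2 have n2: "L2 \<noteq> []" and d2: "distinct L2" and s2: "set L2 \<subseteq> V"
    and a2: "\<forall>x\<in>set L2. \<forall>y\<in>set L2. E x y \<longleftrightarrow> ladj L2 x y" by (auto simp: is_path_iff)
  show "4 \<le> length (L1 @ L2)" using len by simp
  show "distinct (L1 @ L2)" using d1 d2 dj by simp
  show "set (L1 @ L2) \<subseteq> V" using s1 s2 by simp
  have h1: "hd L1 \<in> set L1" "last L1 \<in> set L1" using n1 by auto
  have h2: "hd L2 \<in> set L2" "last L2 \<in> set L2" using n2 by auto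
  have hd: "hd (L1 @ L2) = hd L1" using n1 by simp
  have lst: "last (L1 @ L2) = last L2" using n2 by simp
  have ls1: "ladj L1 x y \<Longrightarrow> x \<in> set L1 \<and> y \<in> set L1" for x y by (rule ladj_set)
  have ls2: "ladj L2 x y \<Longrightarrow> x \<in> set L2 \<and> y \<in> set L2" for x y by (rule ladj_set)
  have c: "E x y \<longleftrightarrow> ladj (L1 @ L2) x y \<or> (x = hd L1 \<and> y = last L2) \<or> (x = last L2 \<and> y = hd L1)"
    if xy: "x \<in> set L1 \<union> set L2" "y \<in> set L1 \<union> set L2" for x y
  proof -
    have la: "ladj (L1 @ L2) x y \<longleftrightarrow> ladj L1 x y \<or> ladj L2 x y \<or>
        ((last L1 = x \<and> hd L2 = y) \<or> (last L1 = y \<and> hd L2 = x))"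
      using n1 n2 by (simp add: ladj_append)
    consider "x \<in> set L1" "y \<in> set L1" | "x \<in> set L1" "y \<in> set L2" | "x \<in> set L2" "y \<in> set L1" | "x \<in> set L2" "y \<in> set L2"
      using xy by blast
    then show ?thesis
    proof cases
      case 1
      then have "y \<notin> set L2" "x \<notin> set L2" using dj by blast+
      then show ?thesis using 1 a1 la ls2 h2 by auto
    next
      case 2
      then have "y \<notin> set L1" "x \<notin> set L2" using dj by blast+
      then show ?thesis using 2 cr la ls1 ls2 e1 e2 g graph_sym by metis
    next
      case 3
      then have "y \<notin> set L2" "x \<notin> set L1" using dj by blast+
      have "E x y \<longleftrightarrow> E y x" using g graph_sym by metis
      then show ?thesis using 3 \<open>y \<notin> set L2\<close> \<open>x \<notin> set L1\<close> cr la ls1 ls2 e1 e2 by metis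
    next
      case 4
      then have "y \<notin> set L1" "x \<notin> set L1" using dj by blast+
      then show ?thesis using 4 a2 la ls1 h1 by auto
    qed
  qed
  show "\<forall>x\<in>set (L1 @ L2). \<forall>y\<in>set (L1 @ L2). E x y \<longleftrightarrow> ladj (L1 @ L2) x y \<or>
          (x = hd (L1 @ L2) \<and> y = last (L1 @ L2)) \<or> (x = last (L1 @ L2) \<and> y = hd (L1 @ L2))"
    unfolding hd lst using c by simp
qed


lemma path_single: "graph V E \<Longrightarrow> x \<in> V \<Longrightarrow> is_path V E [x]"
  by (simp add: is_path_iff graph_irrefl)

lemma path_rev: "is_path V E L \<Longrightarrow> is_path V E (rev L)"
  by (simp add: is_path_iff)

lemma path_append:
  assumes g: "graph V E" and p1: "is_path V E L1" and p2: "is_path V E L2"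
    and dj: "set L1 \<inter> set L2 = {}"
    and e1: "E (last L1) (hd L2)"
    and cr: "\<forall>x\<in>set L1. \<forall>y\<in>set L2. E x y \<longrightarrow> x = last L1 \<and> y = hd L2"
  shows "is_path V E (L1 @ L2)"
proof -
  from p1 have n1: "L1 \<noteq> []" and d1: "distinct L1" and s1: "set L1 \<subseteq> V"
    and a1: "\<forall>x\<in>set L1. \<forall>y\<in>set L1. E x y \<longleftrightarrow> ladj L1 x y" by (auto simp: is_path_iff)
  from p2 have n2: "L2 \<noteq> []" and d2: "distinct L2" and s2: "set L2 \<subseteq> V"
    and a2: "\<forall>x\<in>set L2. \<forall>y\<in>set L2. E x y \<longleftrightarrow> ladj L2 x y" by (auto simp: is_path_iff)
  have h1: "hd L1 \<in> set L1" "last L1 \<in> set L1" using n1 by auto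
  have h2: "hd L2 \<in> set L2" "last L2 \<in> set L2" using n2 by auto
  have ls1: "ladj L1 x y \<Longrightarrow> x \<in> set L1 \<and> y \<in> set L1" for x y by (rule ladj_set)
  have ls2: "ladj L2 x y \<Longrightarrow> x \<in> set L2 \<and> y \<in> set L2" for x y by (rule ladj_set)
  have c: "E x y \<longleftrightarrow> ladj (L1 @ L2) x y"
    if xy: "x \<in> set L1 \<union> set L2" "y \<in> set L1 \<union> set L2" for x y
  proof -
    have la: "ladj (L1 @ L2) x y \<longleftrightarrow> ladj L1 x y \<or> ladj L2 x y \<or>
        ((last L1 = x \<and> hd L2 = y) \<or> (last L1 = y \<and> hd L2 = x))"
      using n1 n2 by (simp add: ladj_append)
    consider "x \<in> set L1" "y \<in> set L1" | "x \<in> set L1" "y \<in> set L2" | "x \<in> set L2" "y \<in> set L1" | "x \<in> set L2" "y \<in> set L2"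
      using xy by blast
    then show ?thesis
    proof cases
      case 1
      then have "y \<notin> set L2" "x \<notin> set L2" using dj by blast+
      then show ?thesis using 1 a1 la ls2 h2 by auto
    next
      case 2
      then have "y \<notin> set L1" "x \<notin> set L2" using dj by blast+
      moreover have "last L1 \<noteq> y" "hd L2 \<noteq> x" using h1 h2 2 dj by blast+
      ultimately show ?thesis using 2 cr la ls1 ls2 e1 by blast
    next
      case 3
      then have "y \<notin> set L2" "x \<notin> set L1" using dj by blast+
      moreover have "last L1 \<noteq> x" "hd L2 \<noteq> y" using h1 h2 3 dj by blast+
      moreover have "E x y \<longleftrightarrow> E y x" using g graph_sym by metis
      ultimately show ?thesis using 3 cr la ls1 ls2 e1 by blast
    next
      case 4
      then have "y \<notin> set L1" "x \<notin> set L1" using dj by blast+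
      then show ?thesis using 4 a2 la ls1 h1 by auto
    qed
  qed
  show ?thesis unfolding is_path_iff using n1 d1 d2 dj s1 s2 c by simp
qed

lemma path_sub:
  assumes p: "is_path V E (A @ B @ C)" and ne: "B \<noteq> []"
  shows "is_path V E B"
proof -
  let ?L = "A @ B @ C"
  from p have d: "distinct ?L" and s: "set ?L \<subseteq> V"
    and a: "\<forall>x\<in>set ?L. \<forall>y\<in>set ?L. E x y \<longleftrightarrow> ladj ?L x y" by (auto simp: is_path_iff)
  have c: "E x y \<longleftrightarrow> ladj B x y" if xy: "x \<in> set B" "y \<in> set B" for x y
  proof -
    have nA: "x \<notin> set A" "y \<notin> set A" "x \<notin> set C" "y \<notin> set C" using d xy by auto
    have "ladj ?L x y \<longleftrightarrow> ladj B x y"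
    proof -
      have "ladj (B @ C) x y \<longleftrightarrow> ladj B x y"
        using nA ne ladj_set[of C x y] by (auto simp: ladj_append)
      moreover have "ladj (A @ (B @ C)) x y \<longleftrightarrow> ladj (B @ C) x y"
        using nA ladj_set[of A x y] by (auto simp: ladj_append)
      ultimately show ?thesis by simp
    qed
    then show ?thesis using a xy by simp
  qed
  show ?thesis unfolding is_path_iff using ne d s c by auto
qed

lemma path_decomp:
  assumes p: "path_from_to V E P a b" and nab: "\<not> E a b" and ab: "a \<noteq> b"
  shows "\<exists>M. P = a # M @ [b] \<and> M \<noteq> []"
proof -
  from p have ne: "P \<noteq> []" and hd: "hd P = a" and lst: "last P = b" and ip: "is_path V E P"
    by (auto simp: path_from_to_def is_path_def)
  obtain T where T: "P = a # T" using ne hd by (cases P) auto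
  have Tne: "T \<noteq> []" using T lst ab by auto
  obtain M where M: "T = M @ [b]" using Tne lst T by (metis append_butlast_last_id last_ConsR)
  have "M \<noteq> []"
  proof
    assume "M = []"
    then have "P = [a, b]" using T M by simp
    then have "ladj P a b" by (simp add: ladj_Cons)
    moreover have "a \<in> set P" "b \<in> set P" using \<open>P = [a,b]\<close> by auto
    ultimately show False using ip nab by (auto simp: is_path_iff)
  qed
  then show ?thesis using T M by blast
qed


lemma theta_hole:
  assumes g: "graph V E" and p1: "path_from_to V E P1 a b" and p2: "path_from_to V E P2 a b"
    and nab: "\<not> E a b" and ab: "a \<noteq> b" and i12: "set P1 \<inter> set P2 = {a, b}"
    and cr: "\<forall>x\<in>set P1 - {a, b}. \<forall>y\<in>set P2 - {a, b}. \<not> E x y"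
  shows "induces_hole V E (set P1 \<union> set P2)"
proof -
  obtain M where M: "P2 = a # M @ [b]" "M \<noteq> []" using path_decomp[OF p2 nab ab] by blast
  obtain M1 where M1: "P1 = a # M1 @ [b]" "M1 \<noteq> []" using path_decomp[OF p1 nab ab] by blast
  have ip1: "is_path V E P1" and ip2: "is_path V E P2" using p1 p2 by (auto simp: path_from_to_def)
  have pM: "is_path V E M" using path_sub[of V E "[a]" M "[b]"] ip2 M by simp
  have d2: "distinct P2" using ip2 by (simp add: is_path_def)
  have aM: "a \<notin> set M" "b \<notin> set M" using d2 M by auto
  have ab1: "a \<in> set P1" "b \<in> set P1" using M1 by auto
  have dj: "set P1 \<inter> set (rev M) = {}" using i12 aM M by auto
  have a2: "\<forall>x\<in>set P2. \<forall>y\<in>set P2. E x y \<longleftrightarrow> ladj P2 x y" using ip2 by (simp add: is_path_iff)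
  have la: "ladj P2 a y \<longleftrightarrow> y = hd M" if "y \<in> set M" for y
    using M aM ab that ladj_set[of "M @ [b]" a y] by (auto simp: ladj_Cons)
  have lb: "ladj P2 b y \<longleftrightarrow> y = last M" if "y \<in> set M" for y
  proof -
    have "ladj P2 b y \<longleftrightarrow> ladj ((a # M) @ [b]) b y" using M by simp
    also have "\<dots> \<longleftrightarrow> ladj (a # M) b y \<or> ladj [b] b y \<or> ((last (a # M) = b \<and> hd [b] = y) \<or> (last (a # M) = y \<and> hd [b] = b))"
      using ladj_append[of "a # M" "[b]" b y] by (simp del: append_Cons)
    also have "\<dots> \<longleftrightarrow> y = last M" using M aM ab that ladj_set[of "a # M" b y]
      by auto
    finally show ?thesis .
  qed
  have hM: "hd M \<in> set M" "last M \<in> set M" using M by auto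
  have e1: "E (last P1) (hd (rev M))"
  proof -
    have "last P1 = b" using M1 by simp
    moreover have "E b (last M)" using a2 lb hM M by simp
    ultimately show ?thesis using M by (simp add: hd_rev)
  qed
  have e2: "E (last (rev M)) (hd P1)"
  proof -
    have "hd P1 = a" using M1 by simp
    moreover have "E a (hd M)" using a2 la hM M by simp
    ultimately show ?thesis using M g graph_sym by (metis last_rev)
  qed
  have crs: "\<forall>x\<in>set P1. \<forall>y\<in>set (rev M). E x y \<longrightarrow> (x = last P1 \<and> y = hd (rev M)) \<or> (x = hd P1 \<and> y = last (rev M))"
  proof (intro ballI impI)
    fix x y assume x: "x \<in> set P1" and y: "y \<in> set (rev M)" and e: "E x y"
    have yM: "y \<in> set M" using y by simp
    have yP2: "y \<in> set P2" "y \<notin> {a,b}" using yM M aM by auto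
    have hr: "hd (rev M) = last M" "last (rev M) = hd M" using M by (auto simp: hd_rev last_rev)
    show "(x = last P1 \<and> y = hd (rev M)) \<or> (x = hd P1 \<and> y = last (rev M))"
    proof (cases "x = a")
      case True
      then have "y = hd M" using e a2 la yM yP2 M by auto
      then show ?thesis using True M1 hr by simp
    next
      case False
      show ?thesis
      proof (cases "x = b")
        case True
        then have "y = last M" using e a2 lb yM yP2 M by auto
        then show ?thesis using True M1 hr by simp
      next
        case False
        then show ?thesis using \<open>x \<noteq> a\<close> cr x yP2 e by blast
      qed
    qed
  qed
  have len: "length P1 + length (rev M) \<ge> 4" using M1 M by (cases M1; cases M) auto
  have "is_hole V E (P1 @ rev M)"
    by (rule hole2[OF g ip1 path_rev[OF pM] dj e1 e2 crs len])
  moreover have "set (P1 @ rev M) = set P1 \<union> set P2" using M ab1 by auto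
  ultimately show ?thesis unfolding induces_hole_def by metis
qed

lemma theta_intro:
  assumes g: "graph V E" and p1: "path_from_to V E P1 a b" and p2: "path_from_to V E P2 a b"
    and p3: "path_from_to V E P3 a b"
    and nab: "\<not> E a b" and ab: "a \<noteq> b"
    and i12: "set P1 \<inter> set P2 = {a, b}" and i13: "set P1 \<inter> set P3 = {a, b}" and i23: "set P2 \<inter> set P3 = {a, b}"
    and c12: "\<forall>x\<in>set P1 - {a, b}. \<forall>y\<in>set P2 - {a, b}. \<not> E x y"
    and c13: "\<forall>x\<in>set P1 - {a, b}. \<forall>y\<in>set P3 - {a, b}. \<not> E x y"
    and c23: "\<forall>x\<in>set P2 - {a, b}. \<forall>y\<in>set P3 - {a, b}. \<not> E x y"
  shows "has_theta V E"
  unfolding has_theta_def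
  using theta_hole[OF g p1 p2 nab ab i12 c12] theta_hole[OF g p1 p3 nab ab i13 c13]
    theta_hole[OF g p2 p3 nab ab i23 c23] assms by blast


lemma pyr_hole:
  assumes g: "graph V E" and p1: "path_from_to V E P1 a b1" and p2: "path_from_to V E P2 a b2"
    and e12: "E b1 b2" and ab1: "a \<noteq> b1" and ab2: "a \<noteq> b2" and i12: "set P1 \<inter> set P2 = {a}"
    and cr: "\<forall>x\<in>set P1 - {a}. \<forall>y\<in>set P2 - {a}. E x y \<longrightarrow> x = b1 \<and> y = b2"
    and len: "length P1 + length P2 \<ge> 5"
  shows "induces_hole V E (set P1 \<union> set P2)"
proof -
  have ip1: "is_path V E P1" and ip2: "is_path V E P2" and h1: "hd P1 = a" "last P1 = b1"
    and h2: "hd P2 = a" "last P2 = b2" using p1 p2 by (auto simp: path_from_to_def)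
  have ne: "P2 \<noteq> []" using ip2 by (simp add: is_path_def)
  obtain T where T: "P2 = a # T" using ne h2 by (cases P2) auto
  have Tne: "T \<noteq> []" using T h2 ab2 by auto
  have lT: "last T = b2" using T Tne h2 by simp
  have pT: "is_path V E T" using path_sub[of V E "[a]" T "[]"] ip2 T Tne by simp
  have d2: "distinct P2" using ip2 by (simp add: is_path_def)
  have aT: "a \<notin> set T" using d2 T by auto
  have a1: "a \<in> set P1" using ip1 h1 by (metis hd_in_set is_path_def)
  have dj: "set P1 \<inter> set (rev T) = {}" using i12 aT T by auto
  have a2: "\<forall>x\<in>set P2. \<forall>y\<in>set P2. E x y \<longleftrightarrow> ladj P2 x y" using ip2 by (simp add: is_path_iff)
  have la: "ladj P2 a y \<longleftrightarrow> y = hd T" if "y \<in> set T" for y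
    using T aT that ladj_set[of T a y] Tne by (auto simp: ladj_Cons)
  have hT: "hd T \<in> set T" using Tne by auto
  have e1: "E (last P1) (hd (rev T))" using h1 lT e12 by (simp add: hd_rev)
  have e2: "E (last (rev T)) (hd P1)"
  proof -
    have "E a (hd T)" using a2 la hT T by simp
    then show ?thesis using h1 g graph_sym by (metis last_rev)
  qed
  have crs: "\<forall>x\<in>set P1. \<forall>y\<in>set (rev T). E x y \<longrightarrow> (x = last P1 \<and> y = hd (rev T)) \<or> (x = hd P1 \<and> y = last (rev T))"
  proof (intro ballI impI)
    fix x y assume x: "x \<in> set P1" and y: "y \<in> set (rev T)" and e: "E x y"
    have yT: "y \<in> set T" using y by simp
    have yP2: "y \<in> set P2" "y \<noteq> a" using yT T aT by auto
    have hr: "hd (rev T) = b2" "last (rev T) = hd T" using Tne lT by (auto simp: hd_rev last_rev)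
    show "(x = last P1 \<and> y = hd (rev T)) \<or> (x = hd P1 \<and> y = last (rev T))"
    proof (cases "x = a")
      case True
      then have "y = hd T" using e a2 la yT yP2 T by auto
      then show ?thesis using True h1 hr by simp
    next
      case False
      then have "x = b1 \<and> y = b2" using cr x yP2 e by blast
      then show ?thesis using h1 hr by simp
    qed
  qed
  have len': "length P1 + length (rev T) \<ge> 4" using len T by simp
  have "is_hole V E (P1 @ rev T)"
    by (rule hole2[OF g ip1 path_rev[OF pT] dj e1 e2 crs len'])
  moreover have "set (P1 @ rev T) = set P1 \<union> set P2" using T a1 by auto
  ultimately show ?thesis unfolding induces_hole_def by metis
qed

lemma pyramid_intro:
  assumes g: "graph V E" and t: "triangle E b1 b2 b3"
    and p1: "path_from_to V E P1 a b1" and p2: "path_from_to V E P2 a b2" and p3: "path_from_to V E P3 a b3"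
    and ab: "a \<noteq> b1" "a \<noteq> b2" "a \<noteq> b3"
    and i12: "set P1 \<inter> set P2 = {a}" and i13: "set P1 \<inter> set P3 = {a}" and i23: "set P2 \<inter> set P3 = {a}"
    and c12: "\<forall>x\<in>set P1 - {a}. \<forall>y\<in>set P2 - {a}. E x y \<longrightarrow> x = b1 \<and> y = b2"
    and c13: "\<forall>x\<in>set P1 - {a}. \<forall>y\<in>set P3 - {a}. E x y \<longrightarrow> x = b1 \<and> y = b3"
    and c23: "\<forall>x\<in>set P2 - {a}. \<forall>y\<in>set P3 - {a}. E x y \<longrightarrow> x = b2 \<and> y = b3"
    and l12: "length P1 + length P2 \<ge> 5" and l13: "length P1 + length P3 \<ge> 5" and l23: "length P2 + length P3 \<ge> 5"
  shows "has_pyramid V E"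
proof -
  have e: "E b1 b2" "E b1 b3" "E b2 b3" using t by (auto simp: triangle_def)
  show ?thesis unfolding has_pyramid_def
    using pyr_hole[OF g p1 p2 e(1) ab(1,2) i12 c12 l12] pyr_hole[OF g p1 p3 e(2) ab(1,3) i13 c13 l13]
      pyr_hole[OF g p2 p3 e(3) ab(2,3) i23 c23 l23] t p1 p2 p3 i12 i13 i23 by blast
qed

lemma prism_hole:
  assumes g: "graph V E" and p1: "path_from_to V E P1 a1 b1" and p2: "path_from_to V E P2 a2 b2"
    and ea: "E a1 a2" and eb: "E b1 b2" and n1: "a1 \<noteq> b1" and n2: "a2 \<noteq> b2"
    and dj: "set P1 \<inter> set P2 = {}"
    and cr: "\<forall>x\<in>set P1. \<forall>y\<in>set P2. E x y \<longrightarrow> (x = a1 \<and> y = a2) \<or> (x = b1 \<and> y = b2)"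
  shows "induces_hole V E (set P1 \<union> set P2)"
proof -
  have ip1: "is_path V E P1" and ip2: "is_path V E P2" and h1: "hd P1 = a1" "last P1 = b1"
    and h2: "hd P2 = a2" "last P2 = b2" using p1 p2 by (auto simp: path_from_to_def)
  have ne: "P1 \<noteq> []" "P2 \<noteq> []" using ip1 ip2 by (auto simp: is_path_def)
  have l1: "length P1 \<ge> 2"
  proof -
    obtain z zs where zz: "P1 = z # zs" using ne by (cases P1) auto
    have "zs \<noteq> []" using zz h1 n1 by auto
    then show ?thesis using zz by (cases zs) auto
  qed
  have l2: "length P2 \<ge> 2"
  proof -
    obtain z zs where zz: "P2 = z # zs" using ne by (cases P2) auto
    have "zs \<noteq> []" using zz h2 n2 by auto
    then show ?thesis using zz by (cases zs) auto
  qed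
  have hr: "hd (rev P2) = b2" "last (rev P2) = a2" using ne h2 by (auto simp: hd_rev last_rev)
  have e1: "E (last P1) (hd (rev P2))" using h1 hr eb by simp
  have e2: "E (last (rev P2)) (hd P1)" using h1 hr ea g graph_sym by metis
  have crs: "\<forall>x\<in>set P1. \<forall>y\<in>set (rev P2). E x y \<longrightarrow> (x = last P1 \<and> y = hd (rev P2)) \<or> (x = hd P1 \<and> y = last (rev P2))"
    using cr h1 hr by auto
  have "is_hole V E (P1 @ rev P2)"
    by (rule hole2[OF g ip1 path_rev[OF ip2]]) (use dj e1 e2 crs l1 l2 in auto)
  then show ?thesis unfolding induces_hole_def by (metis set_append set_rev)
qed

lemma prism_intro:
  assumes g: "graph V E" and ta: "triangle E a1 a2 a3" and tb: "triangle E b1 b2 b3"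
    and p1: "path_from_to V E P1 a1 b1" and p2: "path_from_to V E P2 a2 b2" and p3: "path_from_to V E P3 a3 b3"
    and n: "a1 \<noteq> b1" "a2 \<noteq> b2" "a3 \<noteq> b3"
    and i12: "set P1 \<inter> set P2 = {}" and i13: "set P1 \<inter> set P3 = {}" and i23: "set P2 \<inter> set P3 = {}"
    and c12: "\<forall>x\<in>set P1. \<forall>y\<in>set P2. E x y \<longrightarrow> (x = a1 \<and> y = a2) \<or> (x = b1 \<and> y = b2)"
    and c13: "\<forall>x\<in>set P1. \<forall>y\<in>set P3. E x y \<longrightarrow> (x = a1 \<and> y = a3) \<or> (x = b1 \<and> y = b3)"
    and c23: "\<forall>x\<in>set P2. \<forall>y\<in>set P3. E x y \<longrightarrow> (x = a2 \<and> y = a3) \<or> (x = b2 \<and> y = b3)"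
  shows "has_prism V E"
proof -
  have ea: "E a1 a2" "E a1 a3" "E a2 a3" using ta by (auto simp: triangle_def)
  have eb: "E b1 b2" "E b1 b3" "E b2 b3" using tb by (auto simp: triangle_def)
  have mem: "a1 \<in> set P1" "b1 \<in> set P1" "a2 \<in> set P2" "b2 \<in> set P2" "a3 \<in> set P3" "b3 \<in> set P3"
    using p1 p2 p3 unfolding path_from_to_def is_path_def by auto
  have dab: "{a1, a2, a3} \<inter> {b1, b2, b3} = {}"
    using n mem i12 i13 i23 by blast
  show ?thesis unfolding has_prism_def
    using prism_hole[OF g p1 p2 ea(1) eb(1) n(1,2) i12 c12] prism_hole[OF g p1 p3 ea(2) eb(2) n(1,3) i13 c13]
      prism_hole[OF g p2 p3 ea(3) eb(3) n(2,3) i23 c23] ta tb dab p1 p2 p3 i12 i13 i23 by blast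
qed


definition cadj :: "nat \<Rightarrow> nat \<Rightarrow> nat \<Rightarrow> bool" where
  "cadj n i j \<longleftrightarrow> j = Suc i \<or> i = Suc j \<or> (i = 0 \<and> j = n - 1) \<or> (j = 0 \<and> i = n - 1)"

definition cyc :: "'a set \<Rightarrow> ('a \<Rightarrow> 'a \<Rightarrow> bool) \<Rightarrow> nat \<Rightarrow> (nat \<Rightarrow> 'a) \<Rightarrow> bool" where
  "cyc V E n h \<longleftrightarrow> 4 \<le> n \<and> inj_on h {..<n} \<and> h ` {..<n} \<subseteq> V \<and>
     (\<forall>i<n. \<forall>j<n. E (h i) (h j) \<longleftrightarrow> cadj n i j)"

lemma hole_cyc:
  assumes "is_hole V E H"
  shows "cyc V E (length H) (\<lambda>k. H!k)"
proof -
  let ?n = "length H"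
  from assms have n: "4 \<le> ?n" and d: "distinct H" and s: "set H \<subseteq> V"
    and e: "\<forall>i j. i < ?n \<longrightarrow> j < ?n \<longrightarrow> (E (H!i) (H!j) \<longleftrightarrow> (j = Suc i mod ?n \<or> i = Suc j mod ?n))"
    unfolding is_hole_def by blast+
  have inj: "inj_on (\<lambda>k. H!k) {..<?n}" using d by (simp add: inj_on_def nth_eq_iff_index_eq)
  have img: "(\<lambda>k. H!k) ` {..<?n} \<subseteq> V" using s by (auto simp: nth_mem subset_iff)
  have "E (H!i) (H!j) \<longleftrightarrow> cadj ?n i j" if ij: "i < ?n" "j < ?n" for i j
  proof -
    have "(j = Suc i mod ?n \<or> i = Suc j mod ?n) \<longleftrightarrow> cadj ?n i j"
      unfolding Suc_mod_lt[OF ij(1)] Suc_mod_lt[OF ij(2)] cadj_def using ij n by auto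
    then show ?thesis using e ij by simp
  qed
  then show ?thesis unfolding cyc_def using n inj img by blast
qed

lemma cyc_perm:
  assumes c: "cyc V E n h" and sl: "\<forall>k<n. \<sigma> k < n" and si: "inj_on \<sigma> {..<n}"
    and sc: "\<forall>i<n. \<forall>j<n. cadj n (\<sigma> i) (\<sigma> j) \<longleftrightarrow> cadj n i j"
  shows "cyc V E n (h \<circ> \<sigma>)" and "(h \<circ> \<sigma>) ` {..<n} = h ` {..<n}"
proof -
  have im: "\<sigma> ` {..<n} = {..<n}"
  proof -
    have "\<sigma> ` {..<n} \<subseteq> {..<n}" using sl by auto
    moreover have "card (\<sigma> ` {..<n}) = card {..<n}" using si by (simp add: card_image)
    ultimately show ?thesis by (simp add: card_subset_eq)
  qed
  from c have n: "4 \<le> n" and hi: "inj_on h {..<n}" and hv: "h ` {..<n} \<subseteq> V"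
    and e: "\<forall>i<n. \<forall>j<n. E (h i) (h j) \<longleftrightarrow> cadj n i j" unfolding cyc_def by blast+
  have "(h \<circ> \<sigma>) ` {..<n} = h ` (\<sigma> ` {..<n})" by (rule image_comp[symmetric])
  then show img: "(h \<circ> \<sigma>) ` {..<n} = h ` {..<n}" using im by simp
  have "inj_on (h \<circ> \<sigma>) {..<n}" using hi si im by (simp add: comp_inj_on)
  moreover have "(h \<circ> \<sigma>) ` {..<n} \<subseteq> V" using img hv by simp
  moreover have "\<forall>i<n. \<forall>j<n. E ((h \<circ> \<sigma>) i) ((h \<circ> \<sigma>) j) \<longleftrightarrow> cadj n i j"
    using e sl sc by simp
  ultimately show "cyc V E n (h \<circ> \<sigma>)" unfolding cyc_def using n by blast
qed

lemma rot_props: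
  assumes "s < n" "4 \<le> n"
  shows "\<forall>k<n. (k + s) mod n < n" "inj_on (\<lambda>k. (k + s) mod n) {..<n}"
    "\<forall>i<n. \<forall>j<n. cadj n ((i + s) mod n) ((j + s) mod n) \<longleftrightarrow> cadj n i j"
proof -
  have md: "k < n \<Longrightarrow> (k + s) mod n = (if k + s < n then k + s else k + s - n)" for k
    using assms by (auto simp: mod_if le_mod_geq)
  show "\<forall>k<n. (k + s) mod n < n" using assms by auto
  show "inj_on (\<lambda>k. (k + s) mod n) {..<n}"
    unfolding inj_on_def using md by (auto split: if_splits)
  show "\<forall>i<n. \<forall>j<n. cadj n ((i + s) mod n) ((j + s) mod n) \<longleftrightarrow> cadj n i j"
    using md assms unfolding cadj_def by (auto split: if_splits)
qed

lemma refl_props: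
  assumes "s < n" "4 \<le> n"
  shows "\<forall>k<n. (s + n - k) mod n < n" "inj_on (\<lambda>k. (s + n - k) mod n) {..<n}"
    "\<forall>i<n. \<forall>j<n. cadj n ((s + n - i) mod n) ((s + n - j) mod n) \<longleftrightarrow> cadj n i j"
proof -
  have md: "k < n \<Longrightarrow> (s + n - k) mod n = (if k \<le> s then s - k else s + n - k)" for k
    using assms by (auto simp: mod_if le_mod_geq)
  show "\<forall>k<n. (s + n - k) mod n < n" using assms by auto
  show "inj_on (\<lambda>k. (s + n - k) mod n) {..<n}"
    unfolding inj_on_def using md by (auto split: if_splits)
  show "\<forall>i<n. \<forall>j<n. cadj n ((s + n - i) mod n) ((s + n - j) mod n) \<longleftrightarrow> cadj n i j"
    using md assms unfolding cadj_def by (auto split: if_splits)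
qed


lemma cyc_path_arc:
  assumes c: "cyc V E n h" and p: "is_path V E P" and sp: "set P \<subseteq> h ` {..<n}"
    and l: "2 \<le> length P" and p0: "P!0 = h 0" and p1: "P!1 = h 1"
  shows "\<forall>j<length P. P!j = h j"
proof -
  from c have n: "4 \<le> n" and hi: "inj_on h {..<n}"
    and e: "\<forall>i<n. \<forall>j<n. E (h i) (h j) \<longleftrightarrow> cadj n i j" unfolding cyc_def by blast+
  from p have d: "distinct P"
    and pe: "\<And>i j. i < length P \<Longrightarrow> j < length P \<Longrightarrow> E (P!i) (P!j) \<longleftrightarrow> (j = i + 1 \<or> i = j + 1)"
    unfolding is_path_def by blast+
  have lenP: "length P \<le> n"
  proof -
    have "card (set P) \<le> card (h ` {..<n})" using sp by (simp add: card_mono)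
    also have "\<dots> \<le> n" using card_image_le[of "{..<n}" h] by simp
    finally show ?thesis using d by (simp add: distinct_card)
  qed
  have "P!j = h j" if "j < length P" for j
    using that
  proof (induction j rule: nat_less_induct)
    case (1 j)
    show ?case
    proof (cases "j \<le> 1")
      case True
      then show ?thesis using p0 p1 by (cases j) auto
    next
      case False
      define k where "k = j - 2"
      have k: "j = Suc (Suc k)" using False k_def by simp
      have ih1: "P!(Suc k) = h (Suc k)" using 1 k by simp
      have ih0: "P!k = h k" using 1 k by simp
      have jn: "j < n" using 1(2) lenP by simp
      obtain q where q: "q < n" "P!j = h q" using sp nth_mem[OF 1(2)] by auto
      have "E (P!(Suc k)) (P!j)" using pe[of "Suc k" j] 1(2) k by simp
      then have "cadj n (Suc k) q" using e ih1 q jn k by simp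
      moreover have "q \<noteq> k"
      proof
        assume "q = k"
        then have "P!j = P!k" using q ih0 by simp
        then show False using d 1(2) k nth_eq_iff_index_eq[OF d 1(2), of k] by simp
      qed
      moreover have "q \<noteq> 0"
      proof
        assume "q = 0"
        then have "P!j = P!0" using q p0 by simp
        moreover have "0 < length P" using l by linarith
        ultimately show False using d 1(2) k nth_eq_iff_index_eq[OF d 1(2), of 0] by simp
      qed
      ultimately have "q = j" unfolding cadj_def using k jn n by auto
      then show ?thesis using q by simp
    qed
  qed
  then show ?thesis by blast
qed

lemma cyc_path_len:
  assumes c: "cyc V E n h" and p: "is_path V E P" and l: "2 \<le> length P" and len: "length P \<le> n"
    and arc: "\<forall>j<length P. P!j = h j"
  shows "length P \<le> n - 1"
proof (rule ccontr)
  assume "\<not> length P \<le> n - 1"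
  then have ln: "length P = n" using len by simp
  from c have n: "4 \<le> n"
    and e: "\<forall>i<n. \<forall>j<n. E (h i) (h j) \<longleftrightarrow> cadj n i j" unfolding cyc_def by blast+
  have "E (h 0) (h (n - 1))" using e n by (simp add: cadj_def)
  then have "E (P!0) (P!(n-1))" using arc ln n by simp
  moreover have "\<not> E (P!0) (P!(n-1))" using p ln n unfolding is_path_def by auto
  ultimately show False by simp
qed


locale cfg =
  fixes V :: "'a set" and E :: "'a \<Rightarrow> 'a \<Rightarrow> bool" and n :: nat and h :: "nat \<Rightarrow> 'a"
    and m :: nat and u :: 'a and v :: 'a
  assumes g: "graph V E" and inC: "in_class_C V E" and cy: "cyc V E n h"
    and m2: "2 \<le> m" and mn: "m + 2 \<le> n"
    and uV: "u \<in> V" and vV: "v \<in> V" and uH: "\<forall>i<n. h i \<noteq> u" and vH: "\<forall>i<n. h i \<noteq> v"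
    and uv: "u \<noteq> v" and nuv: "\<not> E u v"
    and sec: "\<forall>i\<le>m. E u (h i) \<longleftrightarrow> (i = 0 \<or> i = m)"
    and maju: "\<forall>c<n. \<exists>i<n. E u (h i) \<and> i \<noteq> c \<and> \<not> cadj n i c"
    and majv: "\<forall>c<n. \<exists>i<n. E v (h i) \<and> i \<noteq> c \<and> \<not> cadj n i c"
begin

lemma n4: "4 \<le> n" using cy by (simp add: cyc_def)

lemma hadj: "i < n \<Longrightarrow> j < n \<Longrightarrow> E (h i) (h j) \<longleftrightarrow> cadj n i j"
  using cy by (simp add: cyc_def)

lemma hinj[simp]: "i < n \<Longrightarrow> j < n \<Longrightarrow> h i = h j \<longleftrightarrow> i = j"
  using cy by (auto simp: cyc_def inj_on_def)

lemma hV: "i < n \<Longrightarrow> h i \<in> V"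
  using cy by (auto simp: cyc_def)

lemma hu[simp]: "i < n \<Longrightarrow> h i \<noteq> u" "i < n \<Longrightarrow> u \<noteq> h i"
  using uH by auto

lemma hv[simp]: "i < n \<Longrightarrow> h i \<noteq> v" "i < n \<Longrightarrow> v \<noteq> h i"
  using vH by auto

lemma Esym: "E x y \<longleftrightarrow> E y x"
  using g graph_sym by metis

lemma Eirr[simp]: "\<not> E x x"
  using g graph_irrefl by metis

lemma nuv'[simp]: "\<not> E u v" "\<not> E v u"
  using nuv Esym by auto

lemma uv'[simp]: "u \<noteq> v" "v \<noteq> u" using uv by auto

lemma noth: "\<not> has_theta V E" "\<not> has_pyramid V E" "\<not> has_prism V E"
  using inC by (auto simp: in_class_C_def)

definition seg :: "nat \<Rightarrow> nat \<Rightarrow> 'a list" where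
  "seg i j = map h [i..<Suc j]"

lemma set_seg[simp]: "set (seg i j) = h ` {i..j}"
  by (auto simp: seg_def)

lemma seg_ne[simp]: "i \<le> j \<Longrightarrow> seg i j \<noteq> []"
  by (simp add: seg_def)

lemma hd_seg[simp]: "i \<le> j \<Longrightarrow> hd (seg i j) = h i"
  by (simp add: seg_def hd_map upt_rec)

lemma last_seg[simp]: "i \<le> j \<Longrightarrow> last (seg i j) = h j"
  by (simp add: seg_def last_map)

lemma length_seg[simp]: "length (seg i j) = Suc j - i"
  by (simp add: seg_def del: upt_Suc)

lemma seg_path:
  assumes ij: "i \<le> j" "j < n" "\<not> (i = 0 \<and> j = n - 1)"
  shows "is_path V E (seg i j)"
proof -
  have l: "length (seg i j) = Suc j - i" by simp
  have nth: "a < Suc j - i \<Longrightarrow> seg i j ! a = h (i + a)" for a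
    by (simp add: seg_def del: upt_Suc)
  have d: "distinct (seg i j)"
    unfolding seg_def using ij by (simp add: distinct_map inj_on_def del: upt_Suc)
  have s: "set (seg i j) \<subseteq> V" using ij hV by auto
  have e: "E (seg i j ! a) (seg i j ! b) \<longleftrightarrow> (b = a + 1 \<or> a = b + 1)"
    if ab: "a < length (seg i j)" "b < length (seg i j)" for a b
    using ab ij nth hadj[of "i + a" "i + b"] unfolding cadj_def by auto
  show ?thesis unfolding is_path_def using ij d s e by simp
qed

end


context cfg begin

lemma hadj'[simp]: "i < n \<Longrightarrow> j < n \<Longrightarrow> E (h i) (h j) \<longleftrightarrow> (j = Suc i \<or> i = Suc j \<or> (i = 0 \<and> j = n - 1) \<or> (j = 0 \<and> i = n - 1))"
  using hadj by (simp add: cadj_def)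

lemma E_hu[simp]: "E (h i) u \<longleftrightarrow> E u (h i)" and E_hv[simp]: "E (h i) v \<longleftrightarrow> E v (h i)"
  using Esym by blast+

lemma secu: "i \<le> m \<Longrightarrow> E u (h i) \<longleftrightarrow> (i = 0 \<or> i = m)"
  using sec by blast

lemma ph: "i < n \<Longrightarrow> is_path V E [h i]" using path_single[OF g hV] by blast
lemma pu: "is_path V E [u]" using path_single[OF g uV] .
lemma pv: "is_path V E [v]" using path_single[OF g vV] .

lemma leaf_T1:
  assumes nR: "\<forall>i. m < i \<and> i < n \<longrightarrow> \<not> E u (h i)"
  shows False
proof -
  have n: "4 \<le> n" "2 \<le> m" "m + 2 \<le> n" using n4 m2 mn by auto
  define P1 where "P1 = [h 0, u, h m]"
  define P2 where "P2 = seg 0 m"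
  define P3 where "P3 = [h 0] @ rev (seg m (n - 1))"
  have p1: "path_from_to V E P1 (h 0) (h m)"
    unfolding path_from_to_def is_path_iff P1_def using n uV hV secu[of 0] secu[of m]
    by (auto simp: ladj_Cons)
  have p2: "path_from_to V E P2 (h 0) (h m)"
    unfolding path_from_to_def P2_def using n by (auto intro!: seg_path)
  have p3: "path_from_to V E P3 (h 0) (h m)"
  proof -
    have "is_path V E P3" unfolding P3_def
      apply (rule path_append[OF g ph path_rev[OF seg_path]])
      using n by (auto simp: hd_rev)
    then show ?thesis unfolding path_from_to_def P3_def using n by (simp add: last_rev)
  qed
  have "has_theta V E"
    apply (rule theta_intro[OF g p1 p2 p3])
    using n nR secu unfolding P1_def P2_def P3_def by auto
  then show False using noth by simp
qed

end


context cfg begin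

definition tau :: "nat \<Rightarrow> nat" where
  "tau k = (if k \<le> m then m - k else m + n - k)"

lemma tau_lt: "k < n \<Longrightarrow> tau k < n"
  using mn by (auto simp: tau_def)

lemma tau_tau: "k < n \<Longrightarrow> tau (tau k) = k"
  using mn by (auto simp: tau_def)

lemma tau_inj: "inj_on tau {..<n}"
  by (metis inj_on_inverseI lessThan_iff tau_tau)

lemma tau_cadj: "i < n \<Longrightarrow> j < n \<Longrightarrow> cadj n (tau i) (tau j) \<longleftrightarrow> cadj n i j"
  using mn unfolding tau_def cadj_def by (auto split: if_splits)

lemma refl_cfg: "cfg V E n (h \<circ> tau) m u v"
proof -
  have cp: "cyc V E n (h \<circ> tau)" "(h \<circ> tau) ` {..<n} = h ` {..<n}"
    using cyc_perm[OF cy _ tau_inj] tau_lt tau_cadj by blast+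
  have a1: "\<forall>i<n. (h \<circ> tau) i \<noteq> u" "\<forall>i<n. (h \<circ> tau) i \<noteq> v" using tau_lt by auto
  have a2: "\<forall>i\<le>m. E u ((h \<circ> tau) i) \<longleftrightarrow> (i = 0 \<or> i = m)"
  proof (intro allI impI)
    fix i assume i: "i \<le> m"
    then have "tau i = m - i" by (simp add: tau_def)
    then show "E u ((h \<circ> tau) i) \<longleftrightarrow> (i = 0 \<or> i = m)" using sec i by auto
  qed
  have maj: "\<forall>c<n. \<exists>i<n. E z ((h \<circ> tau) i) \<and> i \<noteq> c \<and> \<not> cadj n i c"
    if mz: "\<forall>c<n. \<exists>i<n. E z (h i) \<and> i \<noteq> c \<and> \<not> cadj n i c" for z
  proof (intro allI impI)
    fix c assume c: "c < n"
    obtain i where i: "i < n" "E z (h i)" "i \<noteq> tau c" "\<not> cadj n i (tau c)"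
      using mz tau_lt[OF c] by blast
    have "tau i < n" "(h \<circ> tau) (tau i) = h i" using tau_lt[OF i(1)] tau_tau[OF i(1)] by auto
    moreover have "tau i \<noteq> c"
    proof
      assume "tau i = c"
      then have "tau (tau i) = tau c" by simp
      then show False using i(3) tau_tau[OF i(1)] by simp
    qed
    moreover have "\<not> cadj n (tau i) c" using tau_cadj[OF tau_lt[OF i(1)] c] tau_tau[OF i(1)] i(4) by simp
    ultimately show "\<exists>i<n. E z ((h \<circ> tau) i) \<and> i \<noteq> c \<and> \<not> cadj n i c" using i(2) by metis
  qed
  show ?thesis
    apply (unfold_locales)
    using g inC cp(1) m2 mn uV vV a1 uv nuv a2 maj maju majv by auto
qed

lemma minor_contra:
  assumes c: "c < n" and z: "\<forall>i<n. E z (h i) \<longrightarrow> i = c \<or> cadj n i c"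
    and mz: "\<forall>c<n. \<exists>i<n. E z (h i) \<and> i \<noteq> c \<and> \<not> cadj n i c"
  shows False
  using mz c z by blast

end


context cfg begin

lemma leaf_TH_A:
  assumes xy: "x + 2 \<le> y" "y \<le> m"
    and vP: "\<And>i. i \<le> m \<Longrightarrow> E v (h i) \<longleftrightarrow> i = x \<or> i = y"
  shows False
proof -
  have n: "4 \<le> n" "2 \<le> m" "m + 2 \<le> n" using n4 m2 mn by auto
  define P1 where "P1 = [h x, v, h y]"
  define P2 where "P2 = seg x y"
  define P3 where "P3 = rev (seg 0 x) @ [u] @ rev (seg y m)"
  have p1: "path_from_to V E P1 (h x) (h y)"
    unfolding path_from_to_def is_path_iff P1_def using n xy vV hV
    by (auto simp: ladj_Cons vP)
  have p2: "path_from_to V E P2 (h x) (h y)"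
    unfolding path_from_to_def P2_def using n xy by (auto intro!: seg_path)
  have p3: "path_from_to V E P3 (h x) (h y)"
  proof -
    have a: "is_path V E ([u] @ rev (seg y m))"
      apply (rule path_append[OF g pu path_rev[OF seg_path]])
      using n xy secu by (auto simp: hd_rev)
    have "is_path V E P3" unfolding P3_def
      apply (rule path_append[OF g path_rev[OF seg_path] a])
      using n xy secu by (auto simp: hd_rev last_rev)
    then show ?thesis unfolding path_from_to_def P3_def using n xy by (simp add: last_rev hd_rev)
  qed
  have "has_theta V E"
    apply (rule theta_intro[OF g p1 p2 p3])
    using n xy unfolding P1_def P2_def P3_def by (auto simp: vP secu)
  then show False using noth by simp
qed

lemma leaf_PYR_A:
  assumes k: "m + 3 \<le> n" and uR: "\<And>i. m < i \<Longrightarrow> i < n \<Longrightarrow> E u (h i) \<longleftrightarrow> i = n - 1"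
  shows False
proof -
  have n: "4 \<le> n" "2 \<le> m" "m + 2 \<le> n" using n4 m2 mn by auto
  define P1 where "P1 = [h m, u]"
  define P2 where "P2 = rev (seg 0 m)"
  define P3 where "P3 = seg m (n - 1)"
  have p1: "path_from_to V E P1 (h m) u"
    unfolding path_from_to_def is_path_iff P1_def using n uV hV secu[of m]
    by (auto simp: ladj_Cons)
  have p2: "path_from_to V E P2 (h m) (h 0)"
    unfolding path_from_to_def P2_def using n by (auto intro!: path_rev seg_path simp: hd_rev last_rev)
  have p3: "path_from_to V E P3 (h m) (h (n - 1))"
    unfolding path_from_to_def P3_def using n by (auto intro!: seg_path)
  have t: "triangle E u (h 0) (h (n - 1))" unfolding triangle_def using n uR[of "n - 1"] secu[of 0] by simp
  have "has_pyramid V E"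
    apply (rule pyramid_intro[OF g t p1 p2 p3])
    using n k unfolding P1_def P2_def P3_def by (auto simp: uR secu)
  then show False using noth by simp
qed

end


context cfg begin

lemmas PI = path_append[OF g] ph pv pu seg_path path_rev

lemma leaf_TH_C1:
  assumes w: "0 < w" "w < m" and vP: "\<And>i. i \<le> m \<Longrightarrow> E v (h i) \<longleftrightarrow> i = w"
    and ab: "a \<le> b" "m + 2 \<le> a" "b + 2 \<le> n"
    and vab: "\<And>i. a \<le> i \<Longrightarrow> i \<le> b \<Longrightarrow> E v (h i) \<longleftrightarrow> i = a"
    and uab: "\<And>i. a \<le> i \<Longrightarrow> i \<le> b \<Longrightarrow> E u (h i) \<longleftrightarrow> i = b"
  shows False
proof -
  have n: "4 \<le> n" "2 \<le> m" "m + 2 \<le> n" using n4 m2 mn by auto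
  define P1 where "P1 = rev (seg 0 w) @ [u]"
  define P2 where "P2 = seg w m @ [u]"
  define P3 where "P3 = [h w] @ [v] @ seg a b @ [u]"
  have p1: "path_from_to V E P1 (h w) u"
  proof -
    have "is_path V E P1" unfolding P1_def
      by (intro PI) (use n w in \<open>auto simp: secu vP hd_rev last_rev\<close>)
    then show ?thesis unfolding path_from_to_def P1_def using w by (simp add: hd_rev)
  qed
  have p2: "path_from_to V E P2 (h w) u"
  proof -
    have "is_path V E P2" unfolding P2_def
      by (intro PI) (use n w in \<open>auto simp: secu vP\<close>)
    then show ?thesis unfolding path_from_to_def P2_def using w by simp
  qed
  have p3: "path_from_to V E P3 (h w) u"
  proof -
    have "is_path V E P3" unfolding P3_def
      by (intro PI) (use n w ab in \<open>auto simp: secu vP vab uab\<close>)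
    then show ?thesis unfolding path_from_to_def P3_def by simp
  qed
  have "has_theta V E"
    apply (rule theta_intro[OF g p1 p2 p3])
    using n w ab unfolding P1_def P2_def P3_def by (auto simp: secu vP vab uab)
  then show False using noth by simp
qed


lemma leaf_PYR_F:
  assumes x: "x + 1 \<le> m" and vP: "\<And>i. i \<le> m \<Longrightarrow> E v (h i) \<longleftrightarrow> i = x \<or> i = x + 1"
    and ab: "a \<le> b" "m + 2 \<le> a" "b + 2 \<le> n"
    and vab: "\<And>i. a \<le> i \<Longrightarrow> i \<le> b \<Longrightarrow> E v (h i) \<longleftrightarrow> i = a"
    and uab: "\<And>i. a \<le> i \<Longrightarrow> i \<le> b \<Longrightarrow> E u (h i) \<longleftrightarrow> i = b"
  shows False
proof -
  have n: "4 \<le> n" "2 \<le> m" "m + 2 \<le> n" using n4 m2 mn by auto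
  define P1 where "P1 = [u] @ seg 0 x"
  define P2 where "P2 = [u] @ rev (seg (x + 1) m)"
  define P3 where "P3 = [u] @ rev (seg a b) @ [v]"
  have p1: "path_from_to V E P1 u (h x)"
  proof -
    have "is_path V E P1" unfolding P1_def
      by (intro PI) (use n x in \<open>auto simp: secu vP\<close>)
    then show ?thesis unfolding path_from_to_def P1_def by simp
  qed
  have p2: "path_from_to V E P2 u (h (x + 1))"
  proof -
    have "is_path V E P2" unfolding P2_def
      by (intro PI) (use n x in \<open>auto simp: secu vP hd_rev\<close>)
    then show ?thesis unfolding path_from_to_def P2_def using x by (simp add: last_rev)
  qed
  have p3: "path_from_to V E P3 u v"
  proof -
    have "is_path V E P3" unfolding P3_def
      by (intro PI) (use n ab in \<open>auto simp: vab uab hd_rev last_rev\<close>)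
    then show ?thesis unfolding path_from_to_def P3_def by simp
  qed
  have t: "triangle E (h x) (h (x + 1)) v" unfolding triangle_def using n x by (simp add: vP)
  have "has_pyramid V E"
    apply (rule pyramid_intro[OF g t p1 p2 p3])
    using n x ab unfolding P1_def P2_def P3_def by (auto simp: secu vP vab uab)
  then show False using noth by simp
qed

lemma leaf_PYR_B:
  assumes w: "0 < w" "w < m" and vP: "\<And>i. i \<le> m \<Longrightarrow> E v (h i) \<longleftrightarrow> i = w"
    and i: "m + 2 \<le> i" "i < n"
    and vR: "\<And>j. i \<le> j \<Longrightarrow> j < n \<Longrightarrow> E v (h j) \<longleftrightarrow> j = i"
    and uR: "\<And>j. i \<le> j \<Longrightarrow> j < n \<Longrightarrow> E u (h j) \<longleftrightarrow> j = n - 1"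
  shows False
proof -
  have n: "4 \<le> n" "2 \<le> m" "m + 2 \<le> n" using n4 m2 mn by auto
  define P1 where "P1 = rev (seg 0 w)"
  define P2 where "P2 = seg w m @ [u]"
  define P3 where "P3 = [h w] @ [v] @ seg i (n - 1)"
  have p1: "path_from_to V E P1 (h w) (h 0)"
    unfolding path_from_to_def P1_def using n w by (auto intro!: PI simp: hd_rev last_rev)
  have p2: "path_from_to V E P2 (h w) u"
  proof -
    have "is_path V E P2" unfolding P2_def
      by (intro PI) (use n w in \<open>auto simp: secu vP\<close>)
    then show ?thesis unfolding path_from_to_def P2_def using w by simp
  qed
  have p3: "path_from_to V E P3 (h w) (h (n - 1))"
  proof -
    have "is_path V E P3" unfolding P3_def
      by (intro PI) (use n w i in \<open>auto simp: vP vR\<close>)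
    then show ?thesis unfolding path_from_to_def P3_def using i by simp
  qed
  have t: "triangle E (h 0) u (h (n - 1))" unfolding triangle_def using n i by (simp add: uR secu)
  have "has_pyramid V E"
    apply (rule pyramid_intro[OF g t p1 p2 p3])
    using n w i unfolding P1_def P2_def P3_def by (auto simp: secu vP vR uR)
  then show False using noth by simp
qed

lemma leaf_PRISM_G:
  assumes x: "1 \<le> x" "x + 1 \<le> m" and vP: "\<And>i. i \<le> m \<Longrightarrow> E v (h i) \<longleftrightarrow> i = x \<or> i = x + 1"
    and i: "m + 2 \<le> i" "i < n"
    and vR: "\<And>j. i \<le> j \<Longrightarrow> j < n \<Longrightarrow> E v (h j) \<longleftrightarrow> j = i"
    and uR: "\<And>j. i \<le> j \<Longrightarrow> j < n \<Longrightarrow> E u (h j) \<longleftrightarrow> j = n - 1"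
  shows False
proof -
  have n: "4 \<le> n" "2 \<le> m" "m + 2 \<le> n" using n4 m2 mn by auto
  define P1 where "P1 = rev (seg 0 x)"
  define P2 where "P2 = seg (x + 1) m @ [u]"
  define P3 where "P3 = [v] @ seg i (n - 1)"
  have p1: "path_from_to V E P1 (h x) (h 0)"
    unfolding path_from_to_def P1_def using n x by (auto intro!: PI simp: hd_rev last_rev)
  have p2: "path_from_to V E P2 (h (x + 1)) u"
  proof -
    have "is_path V E P2" unfolding P2_def
      by (intro PI) (use n x in \<open>auto simp: secu\<close>)
    then show ?thesis unfolding path_from_to_def P2_def using x by simp
  qed
  have p3: "path_from_to V E P3 v (h (n - 1))"
  proof -
    have "is_path V E P3" unfolding P3_def
      by (intro PI) (use n x i in \<open>auto simp: vR\<close>)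
    then show ?thesis unfolding path_from_to_def P3_def using i by simp
  qed
  have t1: "triangle E (h x) (h (x + 1)) v" unfolding triangle_def using n x by (simp add: vP)
  have t2: "triangle E (h 0) u (h (n - 1))" unfolding triangle_def using n i by (simp add: uR secu)
  have "has_prism V E"
    apply (rule prism_intro[OF g t1 t2 p1 p2 p3])
    using n x i unfolding P1_def P2_def P3_def by (auto simp: secu vP vR uR)
  then show False using noth by simp
qed

lemma leaf_TH_C:
  assumes w: "0 < w" "w < m" and vP: "\<And>i. i \<le> m \<Longrightarrow> E v (h i) \<longleftrightarrow> i = w"
    and vR: "\<And>j. m < j \<Longrightarrow> j < n \<Longrightarrow> E v (h j) \<longleftrightarrow> j = n - 1"
  shows False
proof -
  have n: "4 \<le> n" "2 \<le> m" "m + 2 \<le> n" using n4 m2 mn by auto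
  have vA: "\<And>j. j < n \<Longrightarrow> E v (h j) \<longleftrightarrow> j = w \<or> j = n - 1"
    subgoal for j using w n by (cases "j \<le> m") (auto simp: vP vR)
    done
  define P1 where "P1 = [h w] @ [v] @ [h (n - 1)]"
  define P2 where "P2 = rev (seg 0 w) @ [h (n - 1)]"
  define P3 where "P3 = seg w (n - 1)"
  have p1: "path_from_to V E P1 (h w) (h (n - 1))"
  proof -
    have "is_path V E P1" unfolding P1_def
      by (intro PI) (use n w in \<open>auto simp: vP vR\<close>)
    then show ?thesis unfolding path_from_to_def P1_def by simp
  qed
  have p2: "path_from_to V E P2 (h w) (h (n - 1))"
  proof -
    have "is_path V E P2" unfolding P2_def
      by (intro PI) (use n w in \<open>auto simp: last_rev\<close>)
    then show ?thesis unfolding path_from_to_def P2_def using w by (simp add: hd_rev)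
  qed
  have p3: "path_from_to V E P3 (h w) (h (n - 1))"
    unfolding path_from_to_def P3_def using n w by (auto intro!: PI)
  have "has_theta V E"
    apply (rule theta_intro[OF g p1 p2 p3])
    using n w unfolding P1_def P2_def P3_def by (auto simp: vP vR vA)
  then show False using noth by simp
qed

lemma leaf_TH_D:
  assumes z: "1 \<le> z" "z + 1 \<le> m" and vz: "\<And>j. j \<le> z \<Longrightarrow> E v (h j) \<longleftrightarrow> j = z"
    and vR: "\<And>j. m < j \<Longrightarrow> j < n \<Longrightarrow> E v (h j) \<longleftrightarrow> j = m + 1 \<or> j = n - 1"
    and un: "\<not> E u (h (n - 1))" and t: "m + 1 \<le> t" "t + 3 \<le> n"
    and ut: "\<And>j. m < j \<Longrightarrow> j \<le> t \<Longrightarrow> E u (h j) \<longleftrightarrow> j = t"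
  shows False
proof -
  have n: "4 \<le> n" "2 \<le> m" "m + 2 \<le> n" using n4 m2 mn by auto
  define P1 where "P1 = [h 0] @ [h (n - 1)] @ [v]"
  define P2 where "P2 = seg 0 z @ [v]"
  define P3 where "P3 = [h 0] @ [u] @ rev (seg (m + 1) t) @ [v]"
  have p1: "path_from_to V E P1 (h 0) v"
  proof -
    have "is_path V E P1" unfolding P1_def
      by (intro PI) (use n z t in \<open>auto simp: vz vR\<close>)
    then show ?thesis unfolding path_from_to_def P1_def by simp
  qed
  have p2: "path_from_to V E P2 (h 0) v"
  proof -
    have "is_path V E P2" unfolding P2_def
      by (intro PI) (use n z in \<open>auto simp: vz\<close>)
    then show ?thesis unfolding path_from_to_def P2_def by simp
  qed
  have p3: "path_from_to V E P3 (h 0) v"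
  proof -
    have "is_path V E P3" unfolding P3_def
      by (intro PI) (use n z t in \<open>auto simp: vz vR ut secu hd_rev last_rev\<close>)
    then show ?thesis unfolding path_from_to_def P3_def by simp
  qed
  have "has_theta V E"
    apply (rule theta_intro[OF g p1 p2 p3])
    using n z t un unfolding P1_def P2_def P3_def by (auto simp: vz vR ut secu)
  then show False using noth by simp
qed

lemma leaf_TH_E:
  assumes w: "2 \<le> w" "w < m" and vP: "\<And>i. i \<le> m \<Longrightarrow> E v (h i) \<longleftrightarrow> i = w"
    and nm: "n = m + 4"
    and vR: "\<And>j. m < j \<Longrightarrow> j < n \<Longrightarrow> E v (h j) \<longleftrightarrow> j = m + 1 \<or> j = m + 3"
    and uR: "\<And>j. m < j \<Longrightarrow> j < n \<Longrightarrow> E u (h j) \<longleftrightarrow> j = m + 2"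
  shows False
proof -
  have n: "4 \<le> n" "2 \<le> m" "m + 2 \<le> n" using n4 m2 mn by auto
  define P1 where "P1 = seg 0 w"
  define P2 where "P2 = [h 0] @ [h (n - 1)] @ [v] @ [h w]"
  define P3 where "P3 = [h 0] @ [u] @ rev (seg w m)"
  have p1: "path_from_to V E P1 (h 0) (h w)"
    unfolding path_from_to_def P1_def using n w by (auto intro!: PI)
  have p2: "path_from_to V E P2 (h 0) (h w)"
  proof -
    have "is_path V E P2" unfolding P2_def
      by (intro PI) (use n w nm in \<open>auto simp: vP vR\<close>)
    then show ?thesis unfolding path_from_to_def P2_def by simp
  qed
  have p3: "path_from_to V E P3 (h 0) (h w)"
  proof -
    have "is_path V E P3" unfolding P3_def
      by (intro PI) (use n w in \<open>auto simp: secu hd_rev last_rev\<close>)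
    then show ?thesis unfolding path_from_to_def P3_def using w by (simp add: last_rev)
  qed
  have "has_theta V E"
    apply (rule theta_intro[OF g p1 p2 p3])
    using n w nm unfolding P1_def P2_def P3_def by (auto simp: vP vR uR secu)
  then show False using noth by simp
qed

lemma leaf_PYR_H:
  assumes x: "1 \<le> x" "x + 1 \<le> m" and vP: "\<And>i. i \<le> m \<Longrightarrow> E v (h i) \<longleftrightarrow> i = x \<or> i = x + 1"
    and k: "m + 4 \<le> n"
    and vR: "\<And>j. m < j \<Longrightarrow> j < n \<Longrightarrow> E v (h j) \<longleftrightarrow> j = n - 1"
  shows False
proof -
  have n: "4 \<le> n" "2 \<le> m" "m + 2 \<le> n" using n4 m2 mn by auto
  have vA: "\<And>j. j < n \<Longrightarrow> E v (h j) \<longleftrightarrow> j = x \<or> j = x + 1 \<or> j = n - 1"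
    subgoal for j using x n k by (cases "j \<le> m") (auto simp: vP vR)
    done
  define P1 where "P1 = [h (n - 1)] @ [v]"
  define P2 where "P2 = [h (n - 1)] @ seg 0 x"
  define P3 where "P3 = rev (seg (x + 1) (n - 1))"
  have p1: "path_from_to V E P1 (h (n - 1)) v"
  proof -
    have "is_path V E P1" unfolding P1_def
      by (intro PI) (use n x k in \<open>auto simp: vR\<close>)
    then show ?thesis unfolding path_from_to_def P1_def by simp
  qed
  have p2: "path_from_to V E P2 (h (n - 1)) (h x)"
  proof -
    have "is_path V E P2" unfolding P2_def
      by (intro PI) (use n x k in \<open>auto\<close>)
    then show ?thesis unfolding path_from_to_def P2_def by simp
  qed
  have p3: "path_from_to V E P3 (h (n - 1)) (h (x + 1))"
    unfolding path_from_to_def P3_def using n x k by (auto intro!: PI simp: hd_rev last_rev)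
  have t: "triangle E v (h x) (h (x + 1))" unfolding triangle_def using n x by (simp add: vP)
  have "has_pyramid V E"
    apply (rule pyramid_intro[OF g t p1 p2 p3])
    using n x k unfolding P1_def P2_def P3_def by (auto simp: vP vR vA)
  then show False using noth by simp
qed

lemma leaf_TH_J:
  assumes vP: "\<And>i. i \<le> m \<Longrightarrow> E v (h i) \<longleftrightarrow> i = 0 \<or> i = 1"
    and k: "m + 4 \<le> n"
    and vR: "\<And>j. m < j \<Longrightarrow> j < n \<Longrightarrow> E v (h j) \<longleftrightarrow> j = m + 1 \<or> j = n - 1"
    and u1: "\<not> E u (h (m + 1))" and u2: "E u (h (m + 2))"
  shows False
proof -
  have n: "4 \<le> n" "2 \<le> m" "m + 2 \<le> n" using n4 m2 mn by auto
  define P1 where "P1 = [h (m + 1)] @ [h m] @ [u]"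
  define P2 where "P2 = [h (m + 1)] @ [h (m + 2)] @ [u]"
  define P3 where "P3 = [h (m + 1)] @ [v] @ [h 0] @ [u]"
  have p1: "path_from_to V E P1 (h (m + 1)) u"
  proof -
    have "is_path V E P1" unfolding P1_def
      by (intro PI) (use n k u1 in \<open>auto simp: secu\<close>)
    then show ?thesis unfolding path_from_to_def P1_def by simp
  qed
  have p2: "path_from_to V E P2 (h (m + 1)) u"
  proof -
    have "is_path V E P2" unfolding P2_def
      by (intro PI) (use n k u1 u2 in \<open>auto\<close>)
    then show ?thesis unfolding path_from_to_def P2_def by simp
  qed
  have p3: "path_from_to V E P3 (h (m + 1)) u"
  proof -
    have "is_path V E P3" unfolding P3_def
      by (intro PI) (use n k u1 in \<open>auto simp: vP vR secu\<close>)
    then show ?thesis unfolding path_from_to_def P3_def by simp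
  qed
  have "has_theta V E"
    apply (rule theta_intro[OF g p1 p2 p3])
    using n k u1 u2 unfolding P1_def P2_def P3_def by (auto simp: vP vR secu)
  then show False using noth by simp
qed

lemma leaf_TH_I:
  assumes x: "1 \<le> x" "x + 2 \<le> m" and vP: "\<And>i. i \<le> m \<Longrightarrow> E v (h i) \<longleftrightarrow> i = x \<or> i = x + 1"
    and k: "m + 4 \<le> n"
    and vR: "\<And>j. m < j \<Longrightarrow> j < n \<Longrightarrow> E v (h j) \<longleftrightarrow> j = m + 1 \<or> j = n - 1"
    and u1: "\<not> E u (h (m + 1))" and un: "\<not> E u (h (n - 1))"
  shows False
proof -
  have n: "4 \<le> n" "2 \<le> m" "m + 2 \<le> n" using n4 m2 mn by auto
  define P1 where "P1 = [h 0] @ [h (n - 1)] @ [v]"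
  define P2 where "P2 = seg 0 x @ [v]"
  define P3 where "P3 = [h 0] @ [u] @ [h m] @ [h (m + 1)] @ [v]"
  have p1: "path_from_to V E P1 (h 0) v"
  proof -
    have "is_path V E P1" unfolding P1_def
      by (intro PI) (use n x k in \<open>auto simp: vP vR\<close>)
    then show ?thesis unfolding path_from_to_def P1_def by simp
  qed
  have p2: "path_from_to V E P2 (h 0) v"
  proof -
    have "is_path V E P2" unfolding P2_def
      by (intro PI) (use n x in \<open>auto simp: vP\<close>)
    then show ?thesis unfolding path_from_to_def P2_def by simp
  qed
  have p3: "path_from_to V E P3 (h 0) v"
  proof -
    have "is_path V E P3" unfolding P3_def
      by (intro PI) (use n x k u1 in \<open>auto simp: vP vR secu\<close>)
    then show ?thesis unfolding path_from_to_def P3_def by simp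
  qed
  have "has_theta V E"
    apply (rule theta_intro[OF g p1 p2 p3])
    using n x k u1 un unfolding P1_def P2_def P3_def by (auto simp: vP vR secu)
  then show False using noth by simp
qed

end


lemma closest_pair:
  fixes A B :: "nat \<Rightarrow> bool"
  assumes "\<exists>a b. A a \<and> B b"
  shows "\<exists>a b. A a \<and> B b \<and>
    ((a \<le> b \<and> (\<forall>i. a \<le> i \<and> i \<le> b \<longrightarrow> (A i \<longleftrightarrow> i = a) \<and> (B i \<longleftrightarrow> i = b))) \<or>
     (b \<le> a \<and> (\<forall>i. b \<le> i \<and> i \<le> a \<longrightarrow> (A i \<longleftrightarrow> i = a) \<and> (B i \<longleftrightarrow> i = b))))"
proof -
  define dist :: "nat \<Rightarrow> nat \<Rightarrow> nat" where "dist a b = (if a \<le> b then b - a else a - b)" for a b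
  define Q where "Q d = (\<exists>a b. A a \<and> B b \<and> dist a b = d)" for d
  have "\<exists>d. Q d" using assms unfolding Q_def by blast
  then obtain d where d: "Q d" "\<forall>d'<d. \<not> Q d'" using exists_least_iff[of Q] by blast
  then obtain a b where ab: "A a" "B b" "dist a b = d" unfolding Q_def by blast
  have mn: "\<not> (A a' \<and> B b' \<and> dist a' b' < d)" for a' b' using d(2) unfolding Q_def by blast
  show ?thesis
  proof (cases "a \<le> b")
    case True
    have "\<forall>i. a \<le> i \<and> i \<le> b \<longrightarrow> (A i \<longleftrightarrow> i = a) \<and> (B i \<longleftrightarrow> i = b)"
    proof (intro allI impI conjI)
      fix i assume i: "a \<le> i \<and> i \<le> b"
      show "A i \<longleftrightarrow> i = a"
      proof
        assume "A i"
        show "i = a"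
        proof (rule ccontr)
          assume "i \<noteq> a"
          then have "dist i b < d" using i ab True unfolding dist_def by auto
          then show False using mn[of i b] \<open>A i\<close> ab by blast
        qed
      qed (use ab in simp)
      show "B i \<longleftrightarrow> i = b"
      proof
        assume "B i"
        show "i = b"
        proof (rule ccontr)
          assume "i \<noteq> b"
          then have "dist a i < d" using i ab True unfolding dist_def by auto
          then show False using mn[of a i] \<open>B i\<close> ab by blast
        qed
      qed (use ab in simp)
    qed
    then show ?thesis using ab True by blast
  next
    case False
    have "\<forall>i. b \<le> i \<and> i \<le> a \<longrightarrow> (A i \<longleftrightarrow> i = a) \<and> (B i \<longleftrightarrow> i = b)"
    proof (intro allI impI conjI)
      fix i assume i: "b \<le> i \<and> i \<le> a"
      show "A i \<longleftrightarrow> i = a"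
      proof
        assume "A i"
        show "i = a"
        proof (rule ccontr)
          assume "i \<noteq> a"
          then have "dist i b < d" using i ab False unfolding dist_def by auto
          then show False using mn[of i b] \<open>A i\<close> ab by blast
        qed
      qed (use ab in simp)
      show "B i \<longleftrightarrow> i = b"
      proof
        assume "B i"
        show "i = b"
        proof (rule ccontr)
          assume "i \<noteq> b"
          then have "dist a i < d" using i ab False unfolding dist_def by auto
          then show False using mn[of a i] \<open>B i\<close> ab by blast
        qed
      qed (use ab in simp)
    qed
    moreover have "b \<le> a" using False by simp
    ultimately show ?thesis using ab by blast
  qed
qed

context cfg begin

lemma leaf_CUBE:
  assumes n6: "n = 6" and m2': "m = 2"
    and uA: "\<And>j. j < n \<Longrightarrow> E u (h j) \<longleftrightarrow> j = 0 \<or> j = 2 \<or> j = 4"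
    and vA: "\<And>j. j < n \<Longrightarrow> E v (h j) \<longleftrightarrow> j = 1 \<or> j = 3 \<or> j = 5"
  shows "induced_iso_cube E (h ` {..<n} \<union> {u, v})"
proof -
  have S: "h ` {..<n} \<union> {u, v} = {u, v, h 0, h 1, h 2, h 3, h 4, h 5}"
  proof -
    have "{..<n} = {0, 1, 2, 3, 4, 5}" using n6 by auto
    then show ?thesis by auto
  qed
  have d: "h 0 \<noteq> h 1" "h 0 \<noteq> h 2" "h 0 \<noteq> h 3" "h 0 \<noteq> h 4" "h 0 \<noteq> h 5"
    "h 1 \<noteq> h 2" "h 1 \<noteq> h 3" "h 1 \<noteq> h 4" "h 1 \<noteq> h 5"
    "h 2 \<noteq> h 3" "h 2 \<noteq> h 4" "h 2 \<noteq> h 5" "h 3 \<noteq> h 4" "h 3 \<noteq> h 5" "h 4 \<noteq> h 5"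
    using n6 by simp_all
  have du: "h 0 \<noteq> u" "h 1 \<noteq> u" "h 2 \<noteq> u" "h 3 \<noteq> u" "h 4 \<noteq> u" "h 5 \<noteq> u"
    "h 0 \<noteq> v" "h 1 \<noteq> v" "h 2 \<noteq> v" "h 3 \<noteq> v" "h 4 \<noteq> v" "h 5 \<noteq> v"
    using n6 by simp_all
  define f where "f x = (if x = u then (False, False, False) else if x = v then (True, True, True)
     else if x = h 0 then (True, False, False) else if x = h 1 then (True, True, False)
     else if x = h 2 then (False, True, False) else if x = h 3 then (False, True, True)
     else if x = h 4 then (False, False, True) else (True, False, True))" for x
  have fv: "f u = (False, False, False)" "f v = (True, True, True)"
    "f (h 0) = (True, False, False)" "f (h 1) = (True, True, False)"
    "f (h 2) = (False, True, False)" "f (h 3) = (False, True, True)"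
    "f (h 4) = (False, False, True)" "f (h 5) = (True, False, True)"
    unfolding f_def using d du by (simp_all add: eq_commute)
  have ea: "E (h i) (h j) \<longleftrightarrow> (j = Suc i \<or> i = Suc j \<or> (i = 0 \<and> j = 5) \<or> (j = 0 \<and> i = 5))"
    if "i < 6" "j < 6" for i j using that n6 by simp
  have eu: "E u (h i) \<longleftrightarrow> i = 0 \<or> i = 2 \<or> i = 4" if "i < 6" for i using that n6 uA by simp
  have ev: "E v (h i) \<longleftrightarrow> i = 1 \<or> i = 3 \<or> i = 5" if "i < 6" for i using that n6 vA by simp
  have inj: "inj_on f {u, v, h 0, h 1, h 2, h 3, h 4, h 5}"
    unfolding inj_on_def using fv d du by auto
  have surj: "f ` {u, v, h 0, h 1, h 2, h 3, h 4, h 5} = UNIV"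
  proof -
    have mem: "(a, b, c) \<in> {(False, False, False), (True, True, True), (True, False, False), (True, True, False),
       (False, True, False), (False, True, True), (False, False, True), (True, False, True)}" for a b c
      by (cases a; cases b; cases c; simp)
    have "UNIV = {(False, False, False), (True, True, True), (True, False, False), (True, True, False),
       (False, True, False), (False, True, True), (False, False, True), (True, False, True)}"
      using mem by auto
    then show ?thesis using fv by auto
  qed
  have adj: "\<forall>x\<in>{u, v, h 0, h 1, h 2, h 3, h 4, h 5}. \<forall>y\<in>{u, v, h 0, h 1, h 2, h 3, h 4, h 5}.
      E x y \<longleftrightarrow> cube_adj (f x) (f y)"
    using fv ea eu ev by (auto simp: cube_adj_def)
  show ?thesis unfolding induced_iso_cube_def S bij_betw_def using inj surj adj by blast
qed

end


context cfg begin

lemma hr_P: "i \<le> m \<Longrightarrow> tau i = m - i"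
  by (simp add: tau_def)

lemma hr_R: "m < i \<Longrightarrow> tau i = m + n - i"
  by (simp add: tau_def)

lemma caseC:
  assumes w: "0 < w" "w < m" and vP: "\<And>i. i \<le> m \<Longrightarrow> E v (h i) \<longleftrightarrow> i = w"
  shows "induced_iso_cube E (h ` {..<n} \<union> {u, v})"
proof -
  have n: "4 \<le> n" "2 \<le> m" "m + 2 \<le> n" using n4 m2 mn by auto
  have RC: "cfg V E n (h \<circ> tau) m u v" by (rule refl_cfg)
  have vP': "\<And>i. i \<le> m \<Longrightarrow> E v ((h \<circ> tau) i) \<longleftrightarrow> i = m - w"
    using w by (auto simp: hr_P vP)
  have w': "0 < m - w" "m - w < m" using w by auto
  have vR: "\<exists>j. m < j \<and> j < n \<and> E v (h j)"
  proof (rule ccontr)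
    assume "\<not> ?thesis"
    then have "\<forall>i<n. E v (h i) \<longrightarrow> i = w \<or> cadj n i w"
      using vP by (metis not_le)
    then show False using minor_contra[of w v] majv w n by simp
  qed
  have uR: "\<exists>j. m < j \<and> j < n \<and> E u (h j)"
    using leaf_T1 by blast
  show ?thesis
  proof (cases "(\<exists>a. m + 2 \<le> a \<and> a + 2 \<le> n \<and> E v (h a)) \<and> (\<exists>b. m + 2 \<le> b \<and> b + 2 \<le> n \<and> E u (h b))")
    case True
    then obtain a b where ab: "m + 2 \<le> a \<and> a + 2 \<le> n \<and> E v (h a)" "m + 2 \<le> b \<and> b + 2 \<le> n \<and> E u (h b)"
      and cl: "(a \<le> b \<and> (\<forall>i. a \<le> i \<and> i \<le> b \<longrightarrow> ((m + 2 \<le> i \<and> i + 2 \<le> n \<and> E v (h i)) \<longleftrightarrow> i = a) \<and> ((m + 2 \<le> i \<and> i + 2 \<le> n \<and> E u (h i)) \<longleftrightarrow> i = b))) \<or>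
           (b \<le> a \<and> (\<forall>i. b \<le> i \<and> i \<le> a \<longrightarrow> ((m + 2 \<le> i \<and> i + 2 \<le> n \<and> E v (h i)) \<longleftrightarrow> i = a) \<and> ((m + 2 \<le> i \<and> i + 2 \<le> n \<and> E u (h i)) \<longleftrightarrow> i = b)))"
      using closest_pair[of "\<lambda>i. m + 2 \<le> i \<and> i + 2 \<le> n \<and> E v (h i)" "\<lambda>i. m + 2 \<le> i \<and> i + 2 \<le> n \<and> E u (h i)"]
      by blast
    show ?thesis using cl
    proof
      assume c: "a \<le> b \<and> (\<forall>i. a \<le> i \<and> i \<le> b \<longrightarrow> ((m + 2 \<le> i \<and> i + 2 \<le> n \<and> E v (h i)) \<longleftrightarrow> i = a) \<and> ((m + 2 \<le> i \<and> i + 2 \<le> n \<and> E u (h i)) \<longleftrightarrow> i = b))"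
      have vab: "\<And>i. a \<le> i \<Longrightarrow> i \<le> b \<Longrightarrow> E v (h i) \<longleftrightarrow> i = a"
        using c ab by (metis le_trans add_le_mono1)
      have uab: "\<And>i. a \<le> i \<Longrightarrow> i \<le> b \<Longrightarrow> E u (h i) \<longleftrightarrow> i = b"
        using c ab by (metis le_trans add_le_mono1)
      show ?thesis using leaf_TH_C1[OF w vP _ _ _ vab uab] c ab by blast
    next
      assume c: "b \<le> a \<and> (\<forall>i. b \<le> i \<and> i \<le> a \<longrightarrow> ((m + 2 \<le> i \<and> i + 2 \<le> n \<and> E v (h i)) \<longleftrightarrow> i = a) \<and> ((m + 2 \<le> i \<and> i + 2 \<le> n \<and> E u (h i)) \<longleftrightarrow> i = b))"
      have vab: "\<And>i. b \<le> i \<Longrightarrow> i \<le> a \<Longrightarrow> E v (h i) \<longleftrightarrow> i = a"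
        using c ab by (metis le_trans add_le_mono1)
      have uab: "\<And>i. b \<le> i \<Longrightarrow> i \<le> a \<Longrightarrow> E u (h i) \<longleftrightarrow> i = b"
        using c ab by (metis le_trans add_le_mono1)
      have vab': "\<And>i. m + n - a \<le> i \<Longrightarrow> i \<le> m + n - b \<Longrightarrow> E v ((h \<circ> tau) i) \<longleftrightarrow> i = m + n - a"
        using ab c n by (auto simp: hr_R vab)
      have uab': "\<And>i. m + n - a \<le> i \<Longrightarrow> i \<le> m + n - b \<Longrightarrow> E u ((h \<circ> tau) i) \<longleftrightarrow> i = m + n - b"
        using ab c n by (auto simp: hr_R uab)
      have "m + n - a \<le> m + n - b" "m + 2 \<le> m + n - a" "m + n - b + 2 \<le> n" using ab c by linarith+
      then show ?thesis using cfg.leaf_TH_C1[OF RC w' vP' _ _ _ vab' uab'] by blast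
    qed
  next
    case False
    have nb: "(\<forall>j. m + 2 \<le> j \<and> j + 2 \<le> n \<longrightarrow> \<not> E u (h j)) \<or> (\<forall>j. m + 2 \<le> j \<and> j + 2 \<le> n \<longrightarrow> \<not> E v (h j))"
      using False by blast
    define NV where "NV = {j. m < j \<and> j < n \<and> E v (h j)}"
    define NU where "NU = {j. m < j \<and> j < n \<and> E u (h j)}"
    have fin: "finite NV" "finite NU" unfolding NV_def NU_def by auto
    have ne: "NV \<noteq> {}" "NU \<noteq> {}" using vR uR unfolding NV_def NU_def by auto
    show ?thesis
    proof (cases "\<forall>j. m + 2 \<le> j \<and> j + 2 \<le> n \<longrightarrow> \<not> E u (h j)")
      case nu: True
      show ?thesis
      proof (cases "n = m + 2")
        case True
        have "\<forall>i<n. E u (h i) \<longrightarrow> i = n - 1 \<or> cadj n i (n - 1)"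
        proof (intro allI impI)
          fix i assume i: "i < n" "E u (h i)"
          show "i = n - 1 \<or> cadj n i (n - 1)"
          proof (cases "i \<le> m")
            case True
            then have "i = 0 \<or> i = m" using secu i by blast
            then show ?thesis using \<open>n = m + 2\<close> by (auto simp: cadj_def)
          qed (use i \<open>n = m + 2\<close> in auto)
        qed
        then show ?thesis using minor_contra[of "n - 1" u] maju n by simp
      next
        case k2: False
        then have k: "m + 3 \<le> n" using n by simp
        show ?thesis
        proof (cases "E u (h (m + 1))")
          case U1: False
          have uR': "\<And>i. m < i \<Longrightarrow> i < n \<Longrightarrow> E u (h i) \<longleftrightarrow> i = n - 1"
          proof -
            fix i assume i: "m < i" "i < n"
            have "E u (h (n - 1))"
            proof -
              obtain j where j: "m < j" "j < n" "E u (h j)" using uR by blast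
              have "j = n - 1"
              proof (rule ccontr)
                assume "j \<noteq> n - 1"
                then have "j = m + 1 \<or> (m + 2 \<le> j \<and> j + 2 \<le> n)" using j by linarith
                then show False using nu U1 j by auto
              qed
              then show ?thesis using j by simp
            qed
            moreover have "i \<noteq> n - 1 \<Longrightarrow> i = m + 1 \<or> (m + 2 \<le> i \<and> i + 2 \<le> n)" using i by linarith
            ultimately show "E u (h i) \<longleftrightarrow> i = n - 1" using nu U1 by auto
          qed
          show ?thesis using leaf_PYR_A[OF k uR'] by blast
        next
          case U1: True
          show ?thesis
          proof (cases "E u (h (n - 1))")
            case Un: False
            have uR': "\<And>i. m < i \<Longrightarrow> i < n \<Longrightarrow> E u ((h \<circ> tau) i) \<longleftrightarrow> i = n - 1"
            proof -
              fix i assume i: "m < i" "i < n"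
              have "E u (h (m + n - i)) \<longleftrightarrow> m + n - i = m + 1"
              proof (cases "m + n - i = m + 1")
                case False
                then have "m + 2 \<le> m + n - i \<and> m + n - i + 2 \<le> n \<or> m + n - i = n - 1" using i by linarith
                then show ?thesis using nu Un False by auto
              qed (use U1 in simp)
              then show "E u ((h \<circ> tau) i) \<longleftrightarrow> i = n - 1" using i by (auto simp: hr_R)
            qed
            show ?thesis using cfg.leaf_PYR_A[OF RC k uR'] by blast
          next
            case Un: True
            define im where "im = Max NV"
            have im: "im \<in> NV" "\<And>j. j \<in> NV \<Longrightarrow> j \<le> im" using fin ne unfolding im_def by auto
            show ?thesis
            proof (cases "m + 2 \<le> im")
              case True
              have vRi: "\<And>j. im \<le> j \<Longrightarrow> j < n \<Longrightarrow> E v (h j) \<longleftrightarrow> j = im"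
              proof -
                fix j assume j: "im \<le> j" "j < n"
                show "E v (h j) \<longleftrightarrow> j = im"
                proof
                  assume "E v (h j)"
                  then have "j \<in> NV" using j True unfolding NV_def by auto
                  then show "j = im" using im(2) j by (simp add: le_antisym)
                qed (use im in \<open>simp add: NV_def\<close>)
              qed
              have uRi: "\<And>j. im \<le> j \<Longrightarrow> j < n \<Longrightarrow> E u (h j) \<longleftrightarrow> j = n - 1"
              proof -
                fix j assume j: "im \<le> j" "j < n"
                show "E u (h j) \<longleftrightarrow> j = n - 1"
                proof (cases "j = n - 1")
                  case False
                  then show ?thesis using nu j True by auto
                qed (use Un in simp)
              qed
              have "im < n" using im unfolding NV_def by simp
              then show ?thesis using leaf_PYR_B[OF w vP True _ vRi uRi] by blast
            next
              case False
              then have imv: "im = m + 1" using im unfolding NV_def by auto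
              have vRi: "\<And>j. n - 1 \<le> j \<Longrightarrow> j < n \<Longrightarrow> E v ((h \<circ> tau) j) \<longleftrightarrow> j = n - 1"
              proof -
                fix j assume j: "n - 1 \<le> j" "j < n"
                then have "j = n - 1" by simp
                moreover have "tau (n - 1) = m + 1" using n by (simp add: hr_R)
                ultimately show "E v ((h \<circ> tau) j) \<longleftrightarrow> j = n - 1" using im imv unfolding NV_def by simp
              qed
              have uRi: "\<And>j. n - 1 \<le> j \<Longrightarrow> j < n \<Longrightarrow> E u ((h \<circ> tau) j) \<longleftrightarrow> j = n - 1"
              proof -
                fix j assume j: "n - 1 \<le> j" "j < n"
                then have "j = n - 1" by simp
                moreover have "tau (n - 1) = m + 1" using n by (simp add: hr_R)
                ultimately show "E u ((h \<circ> tau) j) \<longleftrightarrow> j = n - 1" using U1 by simp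
              qed
              have "m + 2 \<le> n - 1" "n - 1 < n" using k by auto
              then show ?thesis using cfg.leaf_PYR_B[OF RC w' vP' _ _ vRi uRi] by blast
            qed
          qed
        qed
      qed
    next
      case nu: False
      have nv: "\<forall>j. m + 2 \<le> j \<and> j + 2 \<le> n \<longrightarrow> \<not> E v (h j)" using nb nu by blast
      have k: "m + 4 \<le> n" using nu by auto
      show ?thesis
      proof (cases "E v (h (m + 1))")
        case V1: False
        have vR1: "\<And>j. m < j \<Longrightarrow> j < n \<Longrightarrow> E v (h j) \<longleftrightarrow> j = n - 1"
        proof -
          fix j assume j: "m < j" "j < n"
          have Vn: "E v (h (n - 1))"
          proof -
            obtain i where i: "m < i" "i < n" "E v (h i)" using vR by blast
            have "i = n - 1"
            proof (rule ccontr)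
              assume "i \<noteq> n - 1"
              then have "i = m + 1 \<or> (m + 2 \<le> i \<and> i + 2 \<le> n)" using i by linarith
              then show False using nv V1 i by auto
            qed
            then show ?thesis using i by simp
          qed
          moreover have "j \<noteq> n - 1 \<Longrightarrow> j = m + 1 \<or> (m + 2 \<le> j \<and> j + 2 \<le> n)" using j by linarith
          ultimately show "E v (h j) \<longleftrightarrow> j = n - 1" using nv V1 by auto
        qed
        show ?thesis using leaf_TH_C[OF w vP vR1] by blast
      next
        case V1: True
        show ?thesis
        proof (cases "E v (h (n - 1))")
          case Vn: False
          have vR1: "\<And>j. m < j \<Longrightarrow> j < n \<Longrightarrow> E v ((h \<circ> tau) j) \<longleftrightarrow> j = n - 1"
          proof -
            fix j assume j: "m < j" "j < n"
            have "E v (h (m + n - j)) \<longleftrightarrow> m + n - j = m + 1"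
            proof (cases "m + n - j = m + 1")
              case False
              then have "m + 2 \<le> m + n - j \<and> m + n - j + 2 \<le> n \<or> m + n - j = n - 1" using j by linarith
              then show ?thesis using nv Vn False by auto
            qed (use V1 in simp)
            then show "E v ((h \<circ> tau) j) \<longleftrightarrow> j = n - 1" using j by (auto simp: hr_R)
          qed
          show ?thesis using cfg.leaf_TH_C[OF RC w' vP' vR1] by blast
        next
          case Vn: True
          have vR2: "\<And>j. m < j \<Longrightarrow> j < n \<Longrightarrow> E v (h j) \<longleftrightarrow> j = m + 1 \<or> j = n - 1"
          proof -
            fix j assume j: "m < j" "j < n"
            have "j \<noteq> n - 1 \<Longrightarrow> j \<noteq> m + 1 \<Longrightarrow> m + 2 \<le> j \<and> j + 2 \<le> n" using j by linarith
            then show "E v (h j) \<longleftrightarrow> j = m + 1 \<or> j = n - 1" using nv V1 Vn by auto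
          qed
          have tnm: "tau (n - 1) = m + 1" using n by (simp add: hr_R)
          show ?thesis
          proof (cases "E u (h (n - 1))")
            case Un: True
            have vRi: "\<And>j. n - 1 \<le> j \<Longrightarrow> j < n \<Longrightarrow> E v (h j) \<longleftrightarrow> j = n - 1" using Vn by auto
            have uRi: "\<And>j. n - 1 \<le> j \<Longrightarrow> j < n \<Longrightarrow> E u (h j) \<longleftrightarrow> j = n - 1" using Un by auto
            have "m + 2 \<le> n - 1" "n - 1 < n" using k by auto
            then show ?thesis using leaf_PYR_B[OF w vP _ _ vRi uRi] by blast
          next
            case Un: False
            show ?thesis
            proof (cases "E u (h (m + 1))")
              case U1: True
              have vRi: "\<And>j. n - 1 \<le> j \<Longrightarrow> j < n \<Longrightarrow> E v ((h \<circ> tau) j) \<longleftrightarrow> j = n - 1"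
              proof -
                fix j assume "n - 1 \<le> j" "j < n"
                then have "j = n - 1" by simp
                then show "E v ((h \<circ> tau) j) \<longleftrightarrow> j = n - 1" using V1 tnm by simp
              qed
              have uRi: "\<And>j. n - 1 \<le> j \<Longrightarrow> j < n \<Longrightarrow> E u ((h \<circ> tau) j) \<longleftrightarrow> j = n - 1"
              proof -
                fix j assume "n - 1 \<le> j" "j < n"
                then have "j = n - 1" by simp
                then show "E u ((h \<circ> tau) j) \<longleftrightarrow> j = n - 1" using U1 tnm by simp
              qed
              have "m + 2 \<le> n - 1" "n - 1 < n" using k by auto
              then show ?thesis using cfg.leaf_PYR_B[OF RC w' vP' _ _ vRi uRi] by blast
            next
              case U1: False
              define t1 where "t1 = Min NU"
              define t2 where "t2 = Max NU"
              have t1: "t1 \<in> NU" "\<And>j. j \<in> NU \<Longrightarrow> t1 \<le> j" using fin ne unfolding t1_def by auto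
              have t2: "t2 \<in> NU" "\<And>j. j \<in> NU \<Longrightarrow> j \<le> t2" using fin ne unfolding t2_def by auto
              have NUr: "j \<in> NU \<Longrightarrow> m + 2 \<le> j \<and> j + 2 \<le> n" for j
              proof -
                assume "j \<in> NU"
                then have "m < j" "j < n" "E u (h j)" unfolding NU_def by auto
                moreover have "j \<noteq> m + 1" "j \<noteq> n - 1" using U1 Un calculation by auto
                ultimately show ?thesis by linarith
              qed
              have NUi: "j \<in> NU \<longleftrightarrow> m < j \<and> j < n \<and> E u (h j)" for j unfolding NU_def by simp
              show ?thesis
              proof (cases "t1 + 3 \<le> n")
                case True
                have vz: "\<And>j. j \<le> w \<Longrightarrow> E v (h j) \<longleftrightarrow> j = w" using vP w by simp
                have tt: "m + 1 \<le> t1" using NUr[OF t1(1)] by simp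
                have ut: "\<And>j. m < j \<Longrightarrow> j \<le> t1 \<Longrightarrow> E u (h j) \<longleftrightarrow> j = t1"
                proof -
                  fix j assume j: "m < j" "j \<le> t1"
                  show "E u (h j) \<longleftrightarrow> j = t1"
                  proof
                    assume "E u (h j)"
                    then have "j \<in> NU" using j True unfolding NU_def by auto
                    then show "j = t1" using t1(2) j by (simp add: le_antisym)
                  qed (use t1 NUi in blast)
                qed
                have "1 \<le> w" "w + 1 \<le> m" using w by auto
                then show ?thesis using leaf_TH_D[OF _ _ vz vR2 Un tt True ut] by blast
              next
                case c1: False
                show ?thesis
                proof (cases "m + 3 \<le> t2")
                  case True
                  have vz: "\<And>j. j \<le> m - w \<Longrightarrow> E v ((h \<circ> tau) j) \<longleftrightarrow> j = m - w" using vP' w by simp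
                  have vR2': "\<And>j. m < j \<Longrightarrow> j < n \<Longrightarrow> E v ((h \<circ> tau) j) \<longleftrightarrow> j = m + 1 \<or> j = n - 1"
                  proof -
                    fix j assume j: "m < j" "j < n"
                    have "E v (h (m + n - j)) \<longleftrightarrow> m + n - j = m + 1 \<or> m + n - j = n - 1"
                      using vR2[of "m + n - j"] j by simp
                    also have "\<dots> \<longleftrightarrow> j = m + 1 \<or> j = n - 1" using j by linarith
                    finally show "E v ((h \<circ> tau) j) \<longleftrightarrow> j = m + 1 \<or> j = n - 1" using j by (simp add: hr_R)
                  qed
                  have un': "\<not> E u ((h \<circ> tau) (n - 1))" using U1 tnm by simp
                  have t2r: "m + 2 \<le> t2" "t2 + 2 \<le> n" using NUr[OF t2(1)] by auto
                  have tt: "m + 1 \<le> m + n - t2" "m + n - t2 + 3 \<le> n" using t2r True by linarith+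
                  have ut: "\<And>j. m < j \<Longrightarrow> j \<le> m + n - t2 \<Longrightarrow> E u ((h \<circ> tau) j) \<longleftrightarrow> j = m + n - t2"
                  proof -
                    fix j assume j: "m < j" "j \<le> m + n - t2"
                    have jr: "t2 \<le> m + n - j" "m + n - j < n" using j t2r by linarith+
                    have "E u (h (m + n - j)) \<longleftrightarrow> m + n - j = t2"
                    proof
                      assume "E u (h (m + n - j))"
                      then have "m + n - j \<in> NU" using jr t2r unfolding NU_def by auto
                      then show "m + n - j = t2" using t2(2) jr by (simp add: le_antisym)
                    qed (use t2 NUi in blast)
                    also have "\<dots> \<longleftrightarrow> j = m + n - t2" using j t2r by linarith
                    finally show "E u ((h \<circ> tau) j) \<longleftrightarrow> j = m + n - t2" using j by (simp add: hr_R)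
                  qed
                  have "1 \<le> m - w" "m - w + 1 \<le> m" using w by auto
                  then show ?thesis using cfg.leaf_TH_D[OF RC _ _ vz vR2' un' tt ut] by blast
                next
                  case c2: False
                  have t1r: "m + 2 \<le> t1" "t1 + 2 \<le> n" using NUr[OF t1(1)] by auto
                  have t2r: "m + 2 \<le> t2" "t2 + 2 \<le> n" using NUr[OF t2(1)] by auto
                  have "t1 \<le> t2" using t1 t2 by blast
                  then have nm: "n = m + 4" and tv: "t1 = m + 2" "t2 = m + 2" using c1 c2 t1r t2r by linarith+
                  have uR4: "\<And>j. m < j \<Longrightarrow> j < n \<Longrightarrow> E u (h j) \<longleftrightarrow> j = m + 2"
                  proof -
                    fix j assume j: "m < j" "j < n"
                    show "E u (h j) \<longleftrightarrow> j = m + 2"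
                    proof
                      assume "E u (h j)"
                      then have "j \<in> NU" using j unfolding NU_def by auto
                      then show "j = m + 2" using t1(2) t2(2) tv by (metis le_antisym)
                    qed (use t1 tv NUi in blast)
                  qed
                  have vR4: "\<And>j. m < j \<Longrightarrow> j < n \<Longrightarrow> E v (h j) \<longleftrightarrow> j = m + 1 \<or> j = m + 3"
                    using vR2 nm by auto
                  show ?thesis
                  proof (cases "2 \<le> w")
                    case True
                    then show ?thesis using leaf_TH_E[OF _ _ vP nm vR4 uR4] w by blast
                  next
                    case w1: False
                    show ?thesis
                    proof (cases "w + 2 \<le> m")
                      case True
                      have vR4': "\<And>j. m < j \<Longrightarrow> j < n \<Longrightarrow> E v ((h \<circ> tau) j) \<longleftrightarrow> j = m + 1 \<or> j = m + 3"
                      proof -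
                        fix j assume j: "m < j" "j < n"
                        have "E v (h (m + n - j)) \<longleftrightarrow> m + n - j = m + 1 \<or> m + n - j = m + 3"
                          using vR4[of "m + n - j"] j by simp
                        also have "\<dots> \<longleftrightarrow> j = m + 1 \<or> j = m + 3" using j nm by linarith
                        finally show "E v ((h \<circ> tau) j) \<longleftrightarrow> j = m + 1 \<or> j = m + 3" using j by (simp add: hr_R)
                      qed
                      have uR4': "\<And>j. m < j \<Longrightarrow> j < n \<Longrightarrow> E u ((h \<circ> tau) j) \<longleftrightarrow> j = m + 2"
                      proof -
                        fix j assume j: "m < j" "j < n"
                        have "E u (h (m + n - j)) \<longleftrightarrow> m + n - j = m + 2"
                          using uR4[of "m + n - j"] j by simp
                        also have "\<dots> \<longleftrightarrow> j = m + 2" using j nm by linarith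
                        finally show "E u ((h \<circ> tau) j) \<longleftrightarrow> j = m + 2" using j by (simp add: hr_R)
                      qed
                      have "2 \<le> m - w" "m - w < m" using True w by auto
                      then show ?thesis using cfg.leaf_TH_E[OF RC _ _ vP' nm vR4' uR4'] by blast
                    next
                      case False
                      then have w1': "w = 1" "m = 2" using w w1 by auto
                      then have n6: "n = 6" using nm by simp
                      have uA: "\<And>j. j < n \<Longrightarrow> E u (h j) \<longleftrightarrow> j = 0 \<or> j = 2 \<or> j = 4"
                      proof -
                        fix j assume j: "j < n"
                        show "E u (h j) \<longleftrightarrow> j = 0 \<or> j = 2 \<or> j = 4"
                        proof (cases "j \<le> m")
                          case True
                          then show ?thesis using secu[OF True] w1' by auto
                        next
                          case False
                          then show ?thesis using uR4[of j] j w1' n6 by auto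
                        qed
                      qed
                      have vA: "\<And>j. j < n \<Longrightarrow> E v (h j) \<longleftrightarrow> j = 1 \<or> j = 3 \<or> j = 5"
                      proof -
                        fix j assume j: "j < n"
                        show "E v (h j) \<longleftrightarrow> j = 1 \<or> j = 3 \<or> j = 5"
                        proof (cases "j \<le> m")
                          case True
                          then show ?thesis using vP[OF True] w1' by auto
                        next
                          case False
                          then show ?thesis using vR4[of j] j w1' n6 by auto
                        qed
                      qed
                      show ?thesis by (rule leaf_CUBE[OF n6 w1'(2) uA vA])
                    qed
                  qed
                qed
              qed
            qed
          qed
        qed
      qed
    qed
  qed
qed

end


context cfg begin

lemma caseB:
  assumes x: "x + 1 \<le> m" and vP: "\<And>i. i \<le> m \<Longrightarrow> E v (h i) \<longleftrightarrow> i = x \<or> i = x + 1"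
  shows False
proof -
  have n: "4 \<le> n" "2 \<le> m" "m + 2 \<le> n" using n4 m2 mn by auto
  have RC: "cfg V E n (h \<circ> tau) m u v" by (rule refl_cfg)
  have vP': "\<And>i. i \<le> m \<Longrightarrow> E v ((h \<circ> tau) i) \<longleftrightarrow> i = m - 1 - x \<or> i = m - 1 - x + 1"
  proof -
    fix i assume i: "i \<le> m"
    have "E v (h (m - i)) \<longleftrightarrow> m - i = x \<or> m - i = x + 1" using vP[of "m - i"] by simp
    also have "\<dots> \<longleftrightarrow> i = m - 1 - x \<or> i = m - 1 - x + 1" using i x by linarith
    finally show "E v ((h \<circ> tau) i) \<longleftrightarrow> i = m - 1 - x \<or> i = m - 1 - x + 1" using i by (simp add: hr_P)
  qed
  have x': "m - 1 - x + 1 \<le> m" using x by linarith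
  have tnm: "tau (n - 1) = m + 1" using n by (simp add: hr_R)
  have vR: "\<exists>j. m < j \<and> j < n \<and> E v (h j)"
  proof (rule ccontr)
    assume "\<not> ?thesis"
    then have "\<forall>i<n. E v (h i) \<longrightarrow> i = x + 1 \<or> cadj n i (x + 1)"
      using vP by (metis Suc_eq_plus1 cadj_def not_le)
    then show False using minor_contra[of "x + 1" v] majv x n by simp
  qed
  have uR: "\<exists>j. m < j \<and> j < n \<and> E u (h j)"
    using leaf_T1 by blast
  define NV where "NV = {j. m < j \<and> j < n \<and> E v (h j)}"
  define NU where "NU = {j. m < j \<and> j < n \<and> E u (h j)}"
  have fin: "finite NV" "finite NU" unfolding NV_def NU_def by auto
  have ne: "NV \<noteq> {}" "NU \<noteq> {}" using vR uR unfolding NV_def NU_def by auto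
  have NVi: "j \<in> NV \<longleftrightarrow> m < j \<and> j < n \<and> E v (h j)" for j unfolding NV_def by simp
  have NUi: "j \<in> NU \<longleftrightarrow> m < j \<and> j < n \<and> E u (h j)" for j unfolding NU_def by simp
  show False
  proof (cases "(\<exists>a. m + 2 \<le> a \<and> a + 2 \<le> n \<and> E v (h a)) \<and> (\<exists>b. m + 2 \<le> b \<and> b + 2 \<le> n \<and> E u (h b))")
    case True
    then obtain a b where ab: "m + 2 \<le> a \<and> a + 2 \<le> n \<and> E v (h a)" "m + 2 \<le> b \<and> b + 2 \<le> n \<and> E u (h b)"
      and cl: "(a \<le> b \<and> (\<forall>i. a \<le> i \<and> i \<le> b \<longrightarrow> ((m + 2 \<le> i \<and> i + 2 \<le> n \<and> E v (h i)) \<longleftrightarrow> i = a) \<and> ((m + 2 \<le> i \<and> i + 2 \<le> n \<and> E u (h i)) \<longleftrightarrow> i = b))) \<or>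
           (b \<le> a \<and> (\<forall>i. b \<le> i \<and> i \<le> a \<longrightarrow> ((m + 2 \<le> i \<and> i + 2 \<le> n \<and> E v (h i)) \<longleftrightarrow> i = a) \<and> ((m + 2 \<le> i \<and> i + 2 \<le> n \<and> E u (h i)) \<longleftrightarrow> i = b)))"
      using closest_pair[of "\<lambda>i. m + 2 \<le> i \<and> i + 2 \<le> n \<and> E v (h i)" "\<lambda>i. m + 2 \<le> i \<and> i + 2 \<le> n \<and> E u (h i)"]
      by blast
    show False using cl
    proof
      assume c: "a \<le> b \<and> (\<forall>i. a \<le> i \<and> i \<le> b \<longrightarrow> ((m + 2 \<le> i \<and> i + 2 \<le> n \<and> E v (h i)) \<longleftrightarrow> i = a) \<and> ((m + 2 \<le> i \<and> i + 2 \<le> n \<and> E u (h i)) \<longleftrightarrow> i = b))"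
      have vab: "\<And>i. a \<le> i \<Longrightarrow> i \<le> b \<Longrightarrow> E v (h i) \<longleftrightarrow> i = a"
        using c ab by (metis le_trans add_le_mono1)
      have uab: "\<And>i. a \<le> i \<Longrightarrow> i \<le> b \<Longrightarrow> E u (h i) \<longleftrightarrow> i = b"
        using c ab by (metis le_trans add_le_mono1)
      show False using leaf_PYR_F[OF x vP _ _ _ vab uab] c ab by blast
    next
      assume c: "b \<le> a \<and> (\<forall>i. b \<le> i \<and> i \<le> a \<longrightarrow> ((m + 2 \<le> i \<and> i + 2 \<le> n \<and> E v (h i)) \<longleftrightarrow> i = a) \<and> ((m + 2 \<le> i \<and> i + 2 \<le> n \<and> E u (h i)) \<longleftrightarrow> i = b))"
      have vab: "\<And>i. b \<le> i \<Longrightarrow> i \<le> a \<Longrightarrow> E v (h i) \<longleftrightarrow> i = a"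
        using c ab by (metis le_trans add_le_mono1)
      have uab: "\<And>i. b \<le> i \<Longrightarrow> i \<le> a \<Longrightarrow> E u (h i) \<longleftrightarrow> i = b"
        using c ab by (metis le_trans add_le_mono1)
      have vab': "\<And>i. m + n - a \<le> i \<Longrightarrow> i \<le> m + n - b \<Longrightarrow> E v ((h \<circ> tau) i) \<longleftrightarrow> i = m + n - a"
        using ab c n by (auto simp: hr_R vab)
      have uab': "\<And>i. m + n - a \<le> i \<Longrightarrow> i \<le> m + n - b \<Longrightarrow> E u ((h \<circ> tau) i) \<longleftrightarrow> i = m + n - b"
        using ab c n by (auto simp: hr_R uab)
      have "m + n - a \<le> m + n - b" "m + 2 \<le> m + n - a" "m + n - b + 2 \<le> n" using ab c by linarith+
      then show False using cfg.leaf_PYR_F[OF RC x' vP' _ _ _ vab' uab'] by blast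
    qed
  next
    case False
    have nb: "(\<forall>j. m + 2 \<le> j \<and> j + 2 \<le> n \<longrightarrow> \<not> E u (h j)) \<or> (\<forall>j. m + 2 \<le> j \<and> j + 2 \<le> n \<longrightarrow> \<not> E v (h j))"
      using False by blast
    show False
    proof (cases "\<forall>j. m + 2 \<le> j \<and> j + 2 \<le> n \<longrightarrow> \<not> E u (h j)")
      case nu: True
      show False
      proof (cases "n = m + 2")
        case True
        have "\<forall>i<n. E u (h i) \<longrightarrow> i = n - 1 \<or> cadj n i (n - 1)"
        proof (intro allI impI)
          fix i assume i: "i < n" "E u (h i)"
          show "i = n - 1 \<or> cadj n i (n - 1)"
          proof (cases "i \<le> m")
            case True
            then have "i = 0 \<or> i = m" using secu i by blast
            then show ?thesis using \<open>n = m + 2\<close> by (auto simp: cadj_def)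
          qed (use i \<open>n = m + 2\<close> in auto)
        qed
        then show False using minor_contra[of "n - 1" u] maju n by simp
      next
        case k2: False
        then have k: "m + 3 \<le> n" using n by simp
        show False
        proof (cases "E u (h (m + 1))")
          case U1: False
          have uR': "\<And>i. m < i \<Longrightarrow> i < n \<Longrightarrow> E u (h i) \<longleftrightarrow> i = n - 1"
          proof -
            fix i assume i: "m < i" "i < n"
            have "E u (h (n - 1))"
            proof -
              obtain j where j: "m < j" "j < n" "E u (h j)" using uR by blast
              have "j = n - 1"
              proof (rule ccontr)
                assume "j \<noteq> n - 1"
                then have "j = m + 1 \<or> (m + 2 \<le> j \<and> j + 2 \<le> n)" using j by linarith
                then show False using nu U1 j by auto
              qed
              then show ?thesis using j by simp
            qed
            moreover have "i \<noteq> n - 1 \<Longrightarrow> i = m + 1 \<or> (m + 2 \<le> i \<and> i + 2 \<le> n)" using i by linarith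
            ultimately show "E u (h i) \<longleftrightarrow> i = n - 1" using nu U1 by auto
          qed
          show False using leaf_PYR_A[OF k uR'] by blast
        next
          case U1: True
          show False
          proof (cases "E u (h (n - 1))")
            case Un: False
            have uR': "\<And>i. m < i \<Longrightarrow> i < n \<Longrightarrow> E u ((h \<circ> tau) i) \<longleftrightarrow> i = n - 1"
            proof -
              fix i assume i: "m < i" "i < n"
              have "E u (h (m + n - i)) \<longleftrightarrow> m + n - i = m + 1"
              proof (cases "m + n - i = m + 1")
                case False
                then have "m + 2 \<le> m + n - i \<and> m + n - i + 2 \<le> n \<or> m + n - i = n - 1" using i by linarith
                then show ?thesis using nu Un False by auto
              qed (use U1 in simp)
              then show "E u ((h \<circ> tau) i) \<longleftrightarrow> i = n - 1" using i by (auto simp: hr_R)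
            qed
            show False using cfg.leaf_PYR_A[OF RC k uR'] by blast
          next
            case Un: True
            have uRn: "\<And>j. m < j \<Longrightarrow> j < n \<Longrightarrow> E u (h j) \<longleftrightarrow> j = m + 1 \<or> j = n - 1"
            proof -
              fix j assume j: "m < j" "j < n"
              have "j \<noteq> n - 1 \<Longrightarrow> j \<noteq> m + 1 \<Longrightarrow> m + 2 \<le> j \<and> j + 2 \<le> n" using j by linarith
              then show "E u (h j) \<longleftrightarrow> j = m + 1 \<or> j = n - 1" using nu U1 Un by auto
            qed
            define imax where "imax = Max NV"
            define imin where "imin = Min NV"
            have imax: "imax \<in> NV" "\<And>j. j \<in> NV \<Longrightarrow> j \<le> imax" using fin ne unfolding imax_def by auto
            have imin: "imin \<in> NV" "\<And>j. j \<in> NV \<Longrightarrow> imin \<le> j" using fin ne unfolding imin_def by auto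
            show False
            proof (cases "1 \<le> x \<and> m + 2 \<le> imax")
              case True
              have vRi: "\<And>j. imax \<le> j \<Longrightarrow> j < n \<Longrightarrow> E v (h j) \<longleftrightarrow> j = imax"
              proof -
                fix j assume j: "imax \<le> j" "j < n"
                show "E v (h j) \<longleftrightarrow> j = imax"
                proof
                  assume "E v (h j)"
                  then have "j \<in> NV" using j True unfolding NV_def by auto
                  then show "j = imax" using imax(2) j by (simp add: le_antisym)
                qed (use imax NVi in blast)
              qed
              have uRi: "\<And>j. imax \<le> j \<Longrightarrow> j < n \<Longrightarrow> E u (h j) \<longleftrightarrow> j = n - 1"
              proof -
                fix j assume j: "imax \<le> j" "j < n"
                then have "m < j" "j \<noteq> m + 1" using True by linarith+
                then show "E u (h j) \<longleftrightarrow> j = n - 1" using uRn[of j] j by simp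
              qed
              have "imax < n" using imax NVi by blast
              then show False using leaf_PRISM_G[OF _ x vP _ _ vRi uRi] True by blast
            next
              case c1: False
              show False
              proof (cases "x + 2 \<le> m \<and> imin + 2 \<le> n")
                case True
                have imr: "m < imin" "imin < n" using imin NVi by blast+
                have vRi: "\<And>j. m + n - imin \<le> j \<Longrightarrow> j < n \<Longrightarrow> E v ((h \<circ> tau) j) \<longleftrightarrow> j = m + n - imin"
                proof -
                  fix j assume j: "m + n - imin \<le> j" "j < n"
                  have jr: "m < m + n - j" "m + n - j \<le> imin" using j imr by linarith+
                  have "E v (h (m + n - j)) \<longleftrightarrow> m + n - j = imin"
                  proof
                    assume "E v (h (m + n - j))"
                    then have "m + n - j \<in> NV" using jr imr unfolding NV_def by auto
                    then show "m + n - j = imin" using imin(2) jr by (simp add: le_antisym)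
                  qed (use imin NVi in blast)
                  also have "\<dots> \<longleftrightarrow> j = m + n - imin" using j imr by linarith
                  finally show "E v ((h \<circ> tau) j) \<longleftrightarrow> j = m + n - imin" using j imr by (simp add: hr_R)
                qed
                have uRi: "\<And>j. m + n - imin \<le> j \<Longrightarrow> j < n \<Longrightarrow> E u ((h \<circ> tau) j) \<longleftrightarrow> j = n - 1"
                proof -
                  fix j assume j: "m + n - imin \<le> j" "j < n"
                  have jr: "m < m + n - j" "m + n - j \<le> imin" "m < j" using j imr True by linarith+
                  have "E u (h (m + n - j)) \<longleftrightarrow> m + n - j = m + 1 \<or> m + n - j = n - 1"
                    using uRn jr j by simp
                  also have "\<dots> \<longleftrightarrow> j = n - 1" using jr j True by linarith
                  finally show "E u ((h \<circ> tau) j) \<longleftrightarrow> j = n - 1" using jr by (simp add: hr_R)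
                qed
                have "1 \<le> m - 1 - x" "m + 2 \<le> m + n - imin" "m + n - imin < n" using True imr by linarith+
                then show False using cfg.leaf_PRISM_G[OF RC _ x' vP' _ _ vRi uRi] by blast
              next
                case c2: False
                have imr: "m < imin" "imax < n" "imin \<le> imax" using imin imax NVi by blast+
                show False
                proof (cases "x = 0")
                  case x0: True
                  then have "imin + 2 > n" using c2 n by auto
                  have NVn: "\<And>j. j \<in> NV \<Longrightarrow> j = n - 1"
                  proof -
                    fix j assume j: "j \<in> NV"
                    have "imin \<le> j" "j < n" using imin(2)[OF j] j NVi by auto
                    then show "j = n - 1" using \<open>imin + 2 > n\<close> by linarith
                  qed
                  have "\<forall>i<n. E v (h i) \<longrightarrow> i = 0 \<or> cadj n i 0"
                  proof (intro allI impI)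
                    fix i assume i: "i < n" "E v (h i)"
                    show "i = 0 \<or> cadj n i 0"
                    proof (cases "i \<le> m")
                      case True
                      then show ?thesis using vP i x0 by (auto simp: cadj_def)
                    next
                      case False
                      then have "i = n - 1" using NVn NVi i by auto
                      then show ?thesis by (simp add: cadj_def)
                    qed
                  qed
                  then show False using minor_contra[of 0 v] majv n by simp
                next
                  case x0: False
                  then have "imax \<le> m + 1" using c1 by auto
                  then have ia: "imax = m + 1" using imr by linarith
                  then have im1: "imin = m + 1" using imr by linarith
                  have "x + 1 = m"
                  proof (rule ccontr)
                    assume "x + 1 \<noteq> m"
                    then have "x + 2 \<le> m" using x by linarith
                    then show False using c2 im1 k by auto
                  qed
                  have NVn: "\<And>j. j \<in> NV \<Longrightarrow> j = m + 1"
                  proof -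
                    fix j assume j: "j \<in> NV"
                    show "j = m + 1" using imax(2)[OF j] imin(2)[OF j] ia im1 by linarith
                  qed
                  have "\<forall>i<n. E v (h i) \<longrightarrow> i = m \<or> cadj n i m"
                  proof (intro allI impI)
                    fix i assume i: "i < n" "E v (h i)"
                    show "i = m \<or> cadj n i m"
                    proof (cases "i \<le> m")
                      case True
                      then show ?thesis using vP i \<open>x + 1 = m\<close> by (auto simp: cadj_def)
                    next
                      case False
                      then have "i = m + 1" using NVn NVi i by auto
                      then show ?thesis by (simp add: cadj_def)
                    qed
                  qed
                  then show False using minor_contra[of m v] majv n by simp
                qed
              qed
            qed
          qed
        qed
      qed
    next
      case nu: False
      have nv: "\<forall>j. m + 2 \<le> j \<and> j + 2 \<le> n \<longrightarrow> \<not> E v (h j)" using nb nu by blast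
      have k: "m + 4 \<le> n" using nu by auto
      have t2m: "tau (m + 2) = n - 2" using n by (simp add: hr_R)
      show False
      proof (cases "E v (h (m + 1))")
        case V1: False
        have vR1: "\<And>j. m < j \<Longrightarrow> j < n \<Longrightarrow> E v (h j) \<longleftrightarrow> j = n - 1"
        proof -
          fix j assume j: "m < j" "j < n"
          have Vn: "E v (h (n - 1))"
          proof -
            obtain i where i: "m < i" "i < n" "E v (h i)" using vR by blast
            have "i = n - 1"
            proof (rule ccontr)
              assume "i \<noteq> n - 1"
              then have "i = m + 1 \<or> (m + 2 \<le> i \<and> i + 2 \<le> n)" using i by linarith
              then show False using nv V1 i by auto
            qed
            then show ?thesis using i by simp
          qed
          moreover have "j \<noteq> n - 1 \<Longrightarrow> j = m + 1 \<or> (m + 2 \<le> j \<and> j + 2 \<le> n)" using j by linarith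
          ultimately show "E v (h j) \<longleftrightarrow> j = n - 1" using nv V1 by auto
        qed
        show False
        proof (cases "x = 0")
          case x0: True
          have "\<forall>i<n. E v (h i) \<longrightarrow> i = 0 \<or> cadj n i 0"
          proof (intro allI impI)
            fix i assume i: "i < n" "E v (h i)"
            show "i = 0 \<or> cadj n i 0"
            proof (cases "i \<le> m")
              case True
              then show ?thesis using vP i x0 by (auto simp: cadj_def)
            next
              case False
              then have "i = n - 1" using vR1 i by auto
              then show ?thesis by (simp add: cadj_def)
            qed
          qed
          then show False using minor_contra[of 0 v] majv n by simp
        next
          case False
          then show False using leaf_PYR_H[OF _ x vP k vR1] by simp
        qed
      next
        case V1: True
        show False
        proof (cases "E v (h (n - 1))")
          case Vn: False
          have vR1: "\<And>j. m < j \<Longrightarrow> j < n \<Longrightarrow> E v ((h \<circ> tau) j) \<longleftrightarrow> j = n - 1"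
          proof -
            fix j assume j: "m < j" "j < n"
            have "E v (h (m + n - j)) \<longleftrightarrow> m + n - j = m + 1"
            proof (cases "m + n - j = m + 1")
              case False
              then have "m + 2 \<le> m + n - j \<and> m + n - j + 2 \<le> n \<or> m + n - j = n - 1" using j by linarith
              then show ?thesis using nv Vn False by auto
            qed (use V1 in simp)
            then show "E v ((h \<circ> tau) j) \<longleftrightarrow> j = n - 1" using j by (auto simp: hr_R)
          qed
          show False
          proof (cases "x + 1 = m")
            case True
            have "\<forall>i<n. E v (h i) \<longrightarrow> i = m \<or> cadj n i m"
            proof (intro allI impI)
              fix i assume i: "i < n" "E v (h i)"
              show "i = m \<or> cadj n i m"
              proof (cases "i \<le> m")
                case True
                then show ?thesis using vP i \<open>x + 1 = m\<close> by (auto simp: cadj_def)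
              next
                case False
                have "i \<noteq> n - 1" using Vn i by auto
                then have "i = m + 1" using nv i False by (metis le_neq_implies_less not_le Suc_eq_plus1 Suc_leI add_Suc_right one_add_one less_diff_conv le_diff_conv2 diff_Suc_1 add_2_eq_Suc)
                then show ?thesis by (simp add: cadj_def)
              qed
            qed
            then show False using minor_contra[of m v] majv n by simp
          next
            case False
            have "1 \<le> m - 1 - x" using False x by linarith
            then show False using cfg.leaf_PYR_H[OF RC _ x' vP' k vR1] by simp
          qed
        next
          case Vn: True
          have vR2: "\<And>j. m < j \<Longrightarrow> j < n \<Longrightarrow> E v (h j) \<longleftrightarrow> j = m + 1 \<or> j = n - 1"
          proof -
            fix j assume j: "m < j" "j < n"
            have "j \<noteq> n - 1 \<Longrightarrow> j \<noteq> m + 1 \<Longrightarrow> m + 2 \<le> j \<and> j + 2 \<le> n" using j by linarith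
            then show "E v (h j) \<longleftrightarrow> j = m + 1 \<or> j = n - 1" using nv V1 Vn by auto
          qed
          have vR2': "\<And>j. m < j \<Longrightarrow> j < n \<Longrightarrow> E v ((h \<circ> tau) j) \<longleftrightarrow> j = m + 1 \<or> j = n - 1"
          proof -
            fix j assume j: "m < j" "j < n"
            have "E v (h (m + n - j)) \<longleftrightarrow> m + n - j = m + 1 \<or> m + n - j = n - 1"
              using vR2[of "m + n - j"] j by simp
            also have "\<dots> \<longleftrightarrow> j = m + 1 \<or> j = n - 1" using j by linarith
            finally show "E v ((h \<circ> tau) j) \<longleftrightarrow> j = m + 1 \<or> j = n - 1" using j by (simp add: hr_R)
          qed
          define t1 where "t1 = Min NU"
          define t2 where "t2 = Max NU"
          have t1: "t1 \<in> NU" "\<And>j. j \<in> NU \<Longrightarrow> t1 \<le> j" using fin ne unfolding t1_def by auto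
          have t2: "t2 \<in> NU" "\<And>j. j \<in> NU \<Longrightarrow> j \<le> t2" using fin ne unfolding t2_def by auto
          have t1r: "m < t1" "t1 < n" "E u (h t1)" using t1 NUi by auto
          have t2r: "m < t2" "t2 < n" "E u (h t2)" using t2 NUi by auto
          show False
          proof (cases "1 \<le> x \<and> E u (h (n - 1))")
            case True
            have vRi: "\<And>j. n - 1 \<le> j \<Longrightarrow> j < n \<Longrightarrow> E v (h j) \<longleftrightarrow> j = n - 1" using Vn by auto
            have uRi: "\<And>j. n - 1 \<le> j \<Longrightarrow> j < n \<Longrightarrow> E u (h j) \<longleftrightarrow> j = n - 1" using True by auto
            have "m + 2 \<le> n - 1" "n - 1 < n" using k by auto
            then show False using leaf_PRISM_G[OF _ x vP _ _ vRi uRi] True by blast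
          next
            case ca: False
            show False
            proof (cases "x + 2 \<le> m \<and> E u (h (m + 1))")
              case True
              have vRi: "\<And>j. n - 1 \<le> j \<Longrightarrow> j < n \<Longrightarrow> E v ((h \<circ> tau) j) \<longleftrightarrow> j = n - 1"
              proof -
                fix j assume "n - 1 \<le> j" "j < n"
                then have "j = n - 1" by simp
                then show "E v ((h \<circ> tau) j) \<longleftrightarrow> j = n - 1" using V1 tnm by simp
              qed
              have uRi: "\<And>j. n - 1 \<le> j \<Longrightarrow> j < n \<Longrightarrow> E u ((h \<circ> tau) j) \<longleftrightarrow> j = n - 1"
              proof -
                fix j assume "n - 1 \<le> j" "j < n"
                then have "j = n - 1" by simp
                then show "E u ((h \<circ> tau) j) \<longleftrightarrow> j = n - 1" using True tnm by simp
              qed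
              have "m + 2 \<le> n - 1" "n - 1 < n" "1 \<le> m - 1 - x" using k True by auto
              then show False using cfg.leaf_PRISM_G[OF RC _ x' vP' _ _ vRi uRi] by blast
            next
              case ca': False
              show False
              proof (cases "1 \<le> x \<and> \<not> E u (h (n - 1)) \<and> t1 + 3 \<le> n")
                case True
                have vz: "\<And>j. j \<le> x \<Longrightarrow> E v (h j) \<longleftrightarrow> j = x" using vP x by simp
                have tt: "m + 1 \<le> t1" using t1r by simp
                have ut: "\<And>j. m < j \<Longrightarrow> j \<le> t1 \<Longrightarrow> E u (h j) \<longleftrightarrow> j = t1"
                proof -
                  fix j assume j: "m < j" "j \<le> t1"
                  show "E u (h j) \<longleftrightarrow> j = t1"
                  proof
                    assume "E u (h j)"
                    then have "j \<in> NU" using j t1r unfolding NU_def by auto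
                    then show "j = t1" using t1(2) j by (simp add: le_antisym)
                  qed (use t1r in simp)
                qed
                have "x + 1 \<le> m" using x by simp
                then show False using leaf_TH_D[OF _ _ vz vR2 _ tt _ ut] True by blast
              next
                case cb: False
                show False
                proof (cases "x + 2 \<le> m \<and> \<not> E u (h (m + 1)) \<and> m + 3 \<le> t2")
                  case True
                  have vz: "\<And>j. j \<le> m - 1 - x \<Longrightarrow> E v ((h \<circ> tau) j) \<longleftrightarrow> j = m - 1 - x"
                    using vP' x by simp
                  have un': "\<not> E u ((h \<circ> tau) (n - 1))" using True tnm by simp
                  have tt: "m + 1 \<le> m + n - t2" "m + n - t2 + 3 \<le> n" using t2r True by linarith+
                  have ut: "\<And>j. m < j \<Longrightarrow> j \<le> m + n - t2 \<Longrightarrow> E u ((h \<circ> tau) j) \<longleftrightarrow> j = m + n - t2"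
                  proof -
                    fix j assume j: "m < j" "j \<le> m + n - t2"
                    have jr: "t2 \<le> m + n - j" "m + n - j < n" using j t2r by linarith+
                    have "E u (h (m + n - j)) \<longleftrightarrow> m + n - j = t2"
                    proof
                      assume "E u (h (m + n - j))"
                      then have "m + n - j \<in> NU" using jr t2r unfolding NU_def by auto
                      then show "m + n - j = t2" using t2(2) jr by (simp add: le_antisym)
                    qed (use t2r in simp)
                    also have "\<dots> \<longleftrightarrow> j = m + n - t2" using j t2r by linarith
                    finally show "E u ((h \<circ> tau) j) \<longleftrightarrow> j = m + n - t2" using j by (simp add: hr_R)
                  qed
                  have "1 \<le> m - 1 - x" "m - 1 - x + 1 \<le> m" using True x by linarith+
                  then show False using cfg.leaf_TH_D[OF RC _ _ vz vR2' un' tt ut] by blast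
                next
                  case cb': False
                  show False
                  proof (cases "x = 0")
                    case x0: True
                    have U1: "\<not> E u (h (m + 1))" using ca' x0 n by auto
                    have "t2 \<le> m + 2" using cb' x0 n U1 by auto
                    have Un: "\<not> E u (h (n - 1))"
                    proof
                      assume "E u (h (n - 1))"
                      then have "n - 1 \<in> NU" using k NUi by auto
                      then show False using t2(2) \<open>t2 \<le> m + 2\<close> k by fastforce
                    qed
                    have "t2 \<noteq> m + 1" using U1 t2r by auto
                    then have "t2 = m + 2" using \<open>t2 \<le> m + 2\<close> t2r by linarith
                    then have u2: "E u (h (m + 2))" using t2r by simp
                    have vP0: "\<And>i. i \<le> m \<Longrightarrow> E v (h i) \<longleftrightarrow> i = 0 \<or> i = 1" using vP x0 by simp
                    show False using leaf_TH_J[OF vP0 k vR2 U1 u2] .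
                  next
                    case x1: False
                    have Un: "\<not> E u (h (n - 1))" using ca x1 by auto
                    have "n \<le> t1 + 2" using cb x1 Un by auto
                    have U1: "\<not> E u (h (m + 1))"
                    proof
                      assume "E u (h (m + 1))"
                      then have "m + 1 \<in> NU" using k NUi by auto
                      then show False using t1(2) \<open>n \<le> t1 + 2\<close> k by fastforce
                    qed
                    show False
                    proof (cases "x + 2 \<le> m")
                      case True
                      then show False using leaf_TH_I[OF _ True vP k vR2 U1 Un] x1 by simp
                    next
                      case False
                      then have xm: "x + 1 = m" using x by simp
                      have "t1 \<noteq> n - 1" using Un t1r by auto
                      then have "t1 = n - 2" using \<open>n \<le> t1 + 2\<close> t1r by linarith
                      then have u2: "E u (h (n - 2))" using t1r by simp
                      have vP0: "\<And>i. i \<le> m \<Longrightarrow> E v ((h \<circ> tau) i) \<longleftrightarrow> i = 0 \<or> i = 1" using vP' xm by simp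
                      have u1': "\<not> E u ((h \<circ> tau) (m + 1))" using Un n by (simp add: hr_R)
                      have u2': "E u ((h \<circ> tau) (m + 2))" using u2 t2m by simp
                      show False using cfg.leaf_TH_J[OF RC vP0 k vR2' u1' u2'] .
                    qed
                  qed
                qed
              qed
            qed
          qed
        qed
      qed
    qed
  qed
qed

end


lemma major_cyc:
  assumes mj: "major V E H z" and c: "cyc V E n h" and hs: "h ` {..<n} = set H" and g: "graph V E"
  shows "\<forall>c<n. \<exists>i<n. E z (h i) \<and> i \<noteq> c \<and> \<not> cadj n i c"
proof (rule ccontr)
  assume "\<not> ?thesis"
  then obtain c where cn: "c < n" and all: "\<forall>i<n. E z (h i) \<longrightarrow> i = c \<or> cadj n i c" by blast
  from c have n: "4 \<le> n" and hi: "inj_on h {..<n}" and hv: "h ` {..<n} \<subseteq> V"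
    and e: "\<forall>i<n. \<forall>j<n. E (h i) (h j) \<longleftrightarrow> cadj n i j" unfolding cyc_def by blast+
  have hinj: "i < n \<Longrightarrow> j < n \<Longrightarrow> h i = h j \<longleftrightarrow> i = j" for i j using hi by (auto simp: inj_on_def)
  define p where "p = (if c = 0 then n - 1 else c - 1)"
  define q where "q = (if c = n - 1 then 0 else c + 1)"
  have pq: "p < n" "q < n" "p \<noteq> c" "q \<noteq> c" "p \<noteq> q" using cn n unfolding p_def q_def by auto
  have cad: "cadj n p c" "cadj n c q" "\<not> cadj n p q" using cn n unfolding p_def q_def cadj_def by auto
  have cadi: "i < n \<Longrightarrow> cadj n i c \<Longrightarrow> i = p \<or> i = q" for i
    using cn n unfolding p_def q_def cadj_def by auto
  define Q where "Q = [h p, h c, h q]"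
  have dQ: "distinct Q" unfolding Q_def using pq cn hinj by auto
  have sQ: "set Q \<subseteq> V" unfolding Q_def using pq cn hv by auto
  have eQ: "\<forall>x\<in>set Q. \<forall>y\<in>set Q. E x y \<longleftrightarrow> ladj Q x y"
  proof -
    have "E (h a) (h b) \<longleftrightarrow> cadj n a b" if "a < n" "b < n" for a b using e that by blast
    moreover have "cadj n c p" "cadj n q c" "\<not> cadj n q p" "\<not> cadj n a a" for a
      using cad n unfolding cadj_def by auto
    ultimately show ?thesis unfolding Q_def using pq cn cad hinj by (auto simp: ladj_Cons)
  qed
  have pQ: "is_path V E Q" unfolding is_path_iff using dQ sQ eQ Q_def by simp
  have subQ: "subpath_of_hole V E H Q" unfolding subpath_of_hole_def using pQ hs pq cn Q_def by auto
  have nb: "nbrs_in E z (set H) \<subseteq> set Q"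
  proof
    fix x assume "x \<in> nbrs_in E z (set H)"
    then have x: "x \<in> set H" "E z x" by (auto simp: nbrs_in_def)
    then obtain i where i: "i < n" "x = h i" using hs by auto
    then have "i = c \<or> i = p \<or> i = q" using all x cadi by blast
    then show "x \<in> set Q" using i Q_def by auto
  qed
  have zz: "z \<in> V" "z \<notin> set H" "nbrs_in E z (set H) \<noteq> {}" using mj by (simp_all add: major_def)
  have lQ: "length Q = 3" by (simp add: Q_def)
  have "minor V E H z" unfolding minor_def using zz subQ nb lQ by blast
  then show False using mj by (simp add: major_def)
qed


lemma set_nth_image: "set H = (\<lambda>k. H!k) ` {..<length H}"
  by (auto simp: in_set_conv_nth)

theorem lemma2p4:
  fixes V :: "'a set" and E :: "'a \<Rightarrow> 'a \<Rightarrow> bool"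
  assumes "graph V E"
    and "in_class_C V E"
    and "is_hole V E H"
    and "major V E H u" and "major V E H v" and "u \<noteq> v" and "\<not> E u v"
    and "sector V E H u P u' u''"
  shows "(card (nbrs_in E v (set P)) \<le> 1 \<and> nbrs_in E v (set P) \<subseteq> {u', u''})
       \<or> (E u' u'' \<and> E v u' \<and> E v u'')
       \<or> card (nbrs_in E v (set P)) \<ge> 3
       \<or> induced_iso_cube E (set H \<union> {u, v})"
proof -
  note g = assms(1) and inC = assms(2) and hole = assms(3) and mu = assms(4) and mv = assms(5)
    and uv = assms(6) and nuv = assms(7) and sec = assms(8)
  let ?n = "length H"
  from sec have uV: "u \<in> V" and uH: "u \<notin> set H" and subp: "subpath_of_hole V E H P"
    and hdP: "hd P = u'" and lastP: "last P = u''" and Eu': "E u u'" and Eu'': "E u u''"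
    and int: "\<forall>x\<in>set P - {u', u''}. \<not> E u x"
    unfolding sector_def by blast+
  from mv have vV: "v \<in> V" and vH: "v \<notin> set H" by (auto simp: major_def)
  from subp have pP: "is_path V E P" and sPH: "set P \<subseteq> set H" by (auto simp: subpath_of_hole_def)
  have Pne: "P \<noteq> []" and dP: "distinct P" using pP by (auto simp: is_path_def)
  show ?thesis
  proof (cases "length P = 1")
    case True
    then obtain a where Pa: "P = [a]" by (cases P) (auto simp: length_Suc_conv)
    then have "nbrs_in E v (set P) \<subseteq> {u'}" using hdP by (auto simp: nbrs_in_def)
    then have "card (nbrs_in E v (set P)) \<le> 1 \<and> nbrs_in E v (set P) \<subseteq> {u', u''}"
      using card_mono[of "{u'}" "nbrs_in E v (set P)"] by auto
    then show ?thesis by blast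
  next
    case False
    have "length P \<noteq> 0" using Pne by simp
    then have l2: "2 \<le> length P" using False by linarith
    have cH: "cyc V E ?n (\<lambda>k. H!k)" by (rule hole_cyc[OF hole])
    have n4: "4 \<le> ?n" using cH by (simp add: cyc_def)
    have eH: "\<forall>i<?n. \<forall>j<?n. E (H!i) (H!j) \<longleftrightarrow> cadj ?n i j" using cH by (simp add: cyc_def)
    have "0 < length P" "1 < length P" using l2 by linarith+
    then have "P!0 \<in> set H" "P!1 \<in> set H" using sPH nth_mem[of 0 P] nth_mem[of 1 P] by auto
    then obtain s t where s: "s < ?n" "H!s = P!0" and t: "t < ?n" "H!t = P!1"
      by (auto simp: in_set_conv_nth)
    have "E (P!0) (P!1)" using pP l2 unfolding is_path_def by auto
    then have "E (H!s) (H!t)" using s t by simp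
    then have cst: "cadj ?n s t" using eH s(1) t(1) by blast
    have "\<exists>\<sigma>. (\<forall>k<?n. \<sigma> k < ?n) \<and> inj_on \<sigma> {..<?n} \<and> (\<forall>i<?n. \<forall>j<?n. cadj ?n (\<sigma> i) (\<sigma> j) \<longleftrightarrow> cadj ?n i j)
        \<and> \<sigma> 0 = s \<and> \<sigma> 1 = t"
    proof (cases "t = Suc s \<or> (t = 0 \<and> s = ?n - 1)")
      case True
      have r0: "(0 + s) mod ?n = s" using s by simp
      have r1: "(1 + s) mod ?n = t"
      proof (cases "t = Suc s")
        case True
        then show ?thesis using t by simp
      next
        case False
        then have "t = 0" "s = ?n - 1" using \<open>t = Suc s \<or> (t = 0 \<and> s = ?n - 1)\<close> by auto
        moreover have "1 + (?n - 1) = ?n" using n4 by simp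
        ultimately show ?thesis by simp
      qed
      show ?thesis using rot_props[OF s(1) n4] r0 r1
        by (intro exI[of _ "\<lambda>k. (k + s) mod ?n"] conjI) assumption+
    next
      case False
      then have "s = Suc t \<or> (s = 0 \<and> t = ?n - 1)" using cst unfolding cadj_def by auto
      then have st: "s = Suc t \<or> (s = 0 \<and> t = ?n - 1)" .
      have r0: "(s + ?n - 0) mod ?n = s" using s by simp
      have r1: "(s + ?n - 1) mod ?n = t"
      proof (cases "s = Suc t")
        case True
        then have "s + ?n - 1 = t + ?n" by simp
        then show ?thesis using t by simp
      next
        case False
        then have "s = 0" "t = ?n - 1" using st by auto
        then show ?thesis using n4 by simp
      qed
      show ?thesis using refl_props[OF s(1) n4] r0 r1
        by (intro exI[of _ "\<lambda>k. (s + ?n - k) mod ?n"] conjI) assumption+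
    qed
    then obtain \<sigma> where sig: "\<forall>k<?n. \<sigma> k < ?n" "inj_on \<sigma> {..<?n}"
        "\<forall>i<?n. \<forall>j<?n. cadj ?n (\<sigma> i) (\<sigma> j) \<longleftrightarrow> cadj ?n i j" "\<sigma> 0 = s" "\<sigma> 1 = t" by blast
    define h where "h = (\<lambda>k. H!k) \<circ> \<sigma>"
    have ch: "cyc V E ?n h" and himg: "h ` {..<?n} = set H"
      using cyc_perm[OF cH sig(1,2,3)] set_nth_image[of H] unfolding h_def by auto
    have h0: "h 0 = P!0" and h1: "h 1 = P!1" using s t sig unfolding h_def by auto
    have arc: "\<forall>j<length P. P!j = h j"
      by (rule cyc_path_arc[OF ch pP _ l2 h0[symmetric] h1[symmetric]]) (use sPH himg in auto)
    have lenPn: "length P \<le> ?n"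
    proof -
      have "card (set P) \<le> card (set H)" using sPH by (simp add: card_mono)
      also have "\<dots> \<le> ?n" by (rule card_length)
      finally show ?thesis using dP by (simp add: distinct_card)
    qed
    have lenP: "length P \<le> ?n - 1" by (rule cyc_path_len[OF ch pP l2 lenPn arc])
    define m where "m = length P - 1"
    have m1: "1 \<le> m" "m + 2 \<le> ?n" using l2 lenP n4 unfolding m_def by auto
    have Pmap: "P = map h [0..<Suc m]"
    proof (rule nth_equalityI)
      show "length P = length (map h [0..<Suc m])" using l2 by (simp add: m_def del: upt_Suc)
      fix i assume "i < length P"
      then show "P ! i = map h [0..<Suc m] ! i" using arc l2 by (simp add: m_def del: upt_Suc)
    qed
    have hinj: "i < ?n \<Longrightarrow> j < ?n \<Longrightarrow> h i = h j \<longleftrightarrow> i = j" for i j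
      using ch by (auto simp: cyc_def inj_on_def)
    have hadj: "i < ?n \<Longrightarrow> j < ?n \<Longrightarrow> E (h i) (h j) \<longleftrightarrow> cadj ?n i j" for i j
      using ch by (simp add: cyc_def)
    have u'h: "u' = h 0" using hdP Pne arc l2 by (simp add: hd_conv_nth)
    have u''h: "u'' = h m" using lastP Pne arc l2 by (simp add: last_conv_nth m_def)
    have setP: "set P = h ` {0..m}" using Pmap by (simp del: upt_Suc add: atLeastLessThanSuc_atLeastAtMost)
    define N where "N = {i. i \<le> m \<and> E v (h i)}"
    have finN: "finite N" unfolding N_def by auto
    have nbN: "nbrs_in E v (set P) = h ` N" unfolding nbrs_in_def setP N_def by auto
    have injN: "inj_on h N" unfolding N_def inj_on_def using hinj m1 by auto
    have cardN: "card (nbrs_in E v (set P)) = card N" using nbN injN by (simp add: card_image)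
    have Nm: "N \<subseteq> {0..m}" unfolding N_def by auto
    show ?thesis
    proof (cases "m = 1")
      case True
      have N01: "N \<subseteq> {0, 1}" using Nm True by auto
      have sub: "nbrs_in E v (set P) \<subseteq> {u', u''}" using nbN N01 u'h u''h True by auto
      show ?thesis
      proof (cases "card (nbrs_in E v (set P)) \<le> 1")
        case True
        then show ?thesis using sub by blast
      next
        case False
        then have "2 \<le> card (nbrs_in E v (set P))" by simp
        moreover have "card (nbrs_in E v (set P)) \<le> card {u', u''}" using sub by (simp add: card_mono)
        moreover have "card {u', u''} \<le> 2" by (cases "u' = u''") auto
        ultimately have "nbrs_in E v (set P) = {u', u''}"
          using sub card_seteq[of "{u', u''}" "nbrs_in E v (set P)"] by simp
        then have "E v u'" "E v u''" by (auto simp: nbrs_in_def)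
        moreover have "E u' u''"
        proof -
          have "0 < ?n" "1 < ?n" using n4 by auto
          then show ?thesis using hadj[of 0 1] u'h u''h \<open>m = 1\<close> by (simp add: cadj_def)
        qed
        ultimately show ?thesis by blast
      qed
    next
      case False
      then have m2: "2 \<le> m" using m1 by simp
      have sec': "\<forall>i\<le>m. E u (h i) \<longleftrightarrow> (i = 0 \<or> i = m)"
      proof (intro allI impI)
        fix i assume i: "i \<le> m"
        show "E u (h i) \<longleftrightarrow> (i = 0 \<or> i = m)"
        proof (cases "i = 0 \<or> i = m")
          case True
          then show ?thesis using Eu' Eu'' u'h u''h by auto
        next
          case False
          have lt: "i < ?n" "0 < ?n" "m < ?n" using i m1 by auto
          have "h i \<noteq> h 0" "h i \<noteq> h m" using hinj[OF lt(1) lt(2)] hinj[OF lt(1) lt(3)] False by auto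
          then have "h i \<in> set P - {u', u''}" using setP i u'h u''h by auto
          then show ?thesis using int False by blast
        qed
      qed
      interpret C: cfg V E ?n h m u v
        apply unfold_locales
        using g inC ch m2 m1 uV vV uH vH himg uv nuv sec'
          major_cyc[OF mu ch himg g] major_cyc[OF mv ch himg g] by auto
      show ?thesis
      proof (cases "card N \<ge> 3")
        case True
        then show ?thesis using cardN by simp
      next
        case c3: False
        have vPN: "\<And>i. i \<le> m \<Longrightarrow> E v (h i) \<longleftrightarrow> i \<in> N" unfolding N_def by simp
        have NH: "h ` {..<?n} \<union> {u, v} = set H \<union> {u, v}" using himg by simp
        show ?thesis
        proof (cases "N \<subseteq> {0, m}")
          case True
          show ?thesis
          proof (cases "card N \<le> 1")
            case True
            have "nbrs_in E v (set P) \<subseteq> {u', u''}" using nbN \<open>N \<subseteq> {0, m}\<close> u'h u''h by auto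
            then show ?thesis using True cardN by simp
          next
            case False
            have "card N \<le> card {0, m}" using \<open>N \<subseteq> {0, m}\<close> by (simp add: card_mono)
            moreover have "card {0, m} = (2::nat)" using m2 by simp
            ultimately have "N = {0, m}" using False \<open>N \<subseteq> {0, m}\<close> card_seteq[of "{0, m}" N] by simp
            then have "\<And>i. i \<le> m \<Longrightarrow> E v (h i) \<longleftrightarrow> i = 0 \<or> i = m" using vPN by simp
            then have False using C.leaf_TH_A[of 0 m] m2 by simp
            then show ?thesis ..
          qed
        next
          case False
          then obtain w where wN: "w \<in> N" "w \<noteq> 0" "w \<noteq> m" by blast
          have wm: "0 < w" "w < m" using wN Nm by auto
          have "card N \<noteq> 0" using wN finN by auto
          then have "card N = 1 \<or> card N = 2" using c3 by linarith
          then show ?thesis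
          proof
            assume "card N = 1"
            then obtain a where "N = {a}" by (auto simp: card_Suc_eq)
            then have Nw: "N = {w}" using wN by simp
            have "\<And>i. i \<le> m \<Longrightarrow> E v (h i) \<longleftrightarrow> i = w" using vPN Nw by simp
            then have "induced_iso_cube E (h ` {..<?n} \<union> {u, v})" using C.caseC[OF wm] by blast
            then show ?thesis using NH by simp
          next
            assume "card N = 2"
            then obtain a b where ab: "N = {a, b}" "a \<noteq> b" by (auto simp: card_Suc_eq numeral_2_eq_2)
            obtain x y where xy: "N = {x, y}" "x < y"
            proof (cases "a < b")
              case True
              then show ?thesis using that ab by blast
            next
              case False
              then have "b < a" using ab by simp
              then show ?thesis using that ab by (metis insert_commute)
            qed
            have ym: "y \<le> m" using xy Nm by auto
            have vP2: "\<And>i. i \<le> m \<Longrightarrow> E v (h i) \<longleftrightarrow> i = x \<or> i = y" using vPN xy by simp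
            show ?thesis
            proof (cases "x + 2 \<le> y")
              case True
              then have False using C.leaf_TH_A[of x y] ym vP2 by blast
              then show ?thesis ..
            next
              case False
              then have "y = x + 1" using xy by simp
              then have False using C.caseB[of x] vP2 ym by simp
              then show ?thesis ..
            qed
          qed
        qed
      qed
    qed
  qed
qed


end
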